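(* Let $U$ be the unipotent radical of a Borel subgroup of ${\mathrm{SO}}(4)$. Then \[\mathrm{H}(\mathcal{O}(\mathcal{C}({\mathrm{SO}}(4)))^{U\times U};t)=\frac{1+t^2}{(1-t)(1-t^2)^2}.\]
   Context: ${\mathrm{SO}}(4)=\{M\in\mathbb{C}^{4\times4}\mid M^TM=I,\ \det M=1\}$. The cone $\mathcal{C}({\mathrm{SO}}(4))$ is the Zariski closure in $\mathbb{C}^{4\times4}$ of $\{cM\mid c\in\mathbb{C},M\in{\mathrm{SO}}(4)\}$, with coordinate ring graded as a quotient of the standard graded polynomial ring by the homogeneous vanishing ideal. ${\mathrm{SO}}(4)\times{\mathrm{SO}}(4)$ acts by $(g,h)\cdot M=gMh^{-1}$, hence on the coordinate ring; $A^{U\times U}$ denotes the graded subalgebra of $U\times U$-invariants. The Hilbert series of $A=\bigoplus_dA_d$ is $\sum_d\dim_{\mathbb{C}}(A_d)t^d$. *)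

theory Defs
  imports "HOL-Analysis.Analysis" "HOL-Computational_Algebra.Formal_Power_Series" "HOL-Library.Function_Algebras"
begin

type_synonym cmat4 = "complex ^ 4 ^ 4"

definition SO4 :: "cmat4 set" where
  "SO4 = {M. transpose M ** M = mat 1 \<and> det M = 1}"

text \<open>The set {cM | c complex, M in SO(4)}; its Zariski closure is the cone C(SO(4)).
  Polynomials vanish on the closure iff they vanish on this set.\<close>
definition cone_SO4 :: "cmat4 set" where
  "cone_SO4 = {(\<chi> i j. c * M $ i $ j) | c M. M \<in> SO4}"

definition fscale :: "complex \<Rightarrow> (cmat4 \<Rightarrow> complex) \<Rightarrow> (cmat4 \<Rightarrow> complex)" where
  "fscale c f = (\<lambda>M. c * f M)"

definition monomials :: "nat \<Rightarrow> (cmat4 \<Rightarrow> complex) set" where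
  "monomials d = {(\<lambda>M. \<Prod>i\<in>UNIV. \<Prod>j\<in>UNIV. (M $ i $ j) ^ (e i j)) | e :: 4 \<Rightarrow> 4 \<Rightarrow> nat.
                    (\<Sum>i\<in>UNIV. \<Sum>j\<in>UNIV. e i j) = d}"

definition hom_polys :: "nat \<Rightarrow> (cmat4 \<Rightarrow> complex) set" where
  "hom_polys d = module.span fscale (monomials d)"

text \<open>Degree d part of the coordinate ring of the cone: homogeneous degree-d
  polynomials modulo those vanishing on the cone, realised as their restrictions
  to the cone (functions set to 0 outside).\<close>
definition coord_ring_deg :: "nat \<Rightarrow> (cmat4 \<Rightarrow> complex) set" where
  "coord_ring_deg d = (\<lambda>p M. if M \<in> cone_SO4 then p M else 0) ` hom_polys d"

text \<open>Indices of type 4 are 0 < 1 < 2 < 3. Change of basis P with P^T P = 2 * antidiag(1,1,1,1); conjugating by P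
  carries SO(4) to the orthogonal group of an antidiagonal form, whose upper
  triangular elements form a Borel subgroup.\<close>
definition Pmat :: cmat4 where
  "Pmat = (\<chi> i j.
     if i = 0 then (if j = 0 \<or> j = 3 then 1 else 0)
     else if i = 1 then (if j = 0 then \<i> else if j = 3 then - \<i> else 0)
     else if i = 2 then (if j = 1 \<or> j = 2 then 1 else 0)
     else (if j = 1 then \<i> else if j = 2 then - \<i> else 0))"

definition upper_unitriangular :: "cmat4 \<Rightarrow> bool" where
  "upper_unitriangular h \<longleftrightarrow> (\<forall>i j. (j < i \<longrightarrow> h $ i $ j = 0) \<and> h $ i $ i = 1)"

definition U_SO4 :: "cmat4 set" where
  "U_SO4 = {g \<in> SO4. \<exists>h. upper_unitriangular h \<and> g ** Pmat = Pmat ** h}"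

definition inv_deg :: "nat \<Rightarrow> (cmat4 \<Rightarrow> complex) set" where
  "inv_deg d = {f \<in> coord_ring_deg d.
      \<forall>g\<in>U_SO4. \<forall>h\<in>U_SO4. \<forall>M\<in>cone_SO4. f (g ** M ** matrix_inv h) = f M}"

definition hilbert_series_inv :: "rat fps" where
  "hilbert_series_inv = Abs_fps (\<lambda>d. of_nat (vector_space.dim fscale (inv_deg d)))"

end

theory Submission
  imports Defs
begin

lemma exh4: "(x::4) = 0 \<or> x = 1 \<or> x = 2 \<or> x = 3"
proof -
  have "x = 1 \<or> x = 2 \<or> x = 3 \<or> x = 4" by (rule exhaust_4)
  moreover have "(4::4) = 0" by simp
  ultimately show ?thesis by (elim disjE) simp_all
qed
lemma UNIV4: "(UNIV::4 set) = {0,1,2,3}"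
  using exh4 by auto
lemma distinct4: "(0::4) \<noteq> 1" "(0::4) \<noteq> 2" "(0::4) \<noteq> 3" "(1::4) \<noteq> 2" "(1::4) \<noteq> 3" "(2::4) \<noteq> 3"
  "(1::4) \<noteq> 0" "(2::4) \<noteq> 0" "(3::4) \<noteq> 0" "(2::4) \<noteq> 1" "(3::4) \<noteq> 1" "(3::4) \<noteq> 2"
  by simp_all
lemma sum4: "(\<Sum>i\<in>(UNIV::4 set). f i) = f 0 + f 1 + f 2 + f 3"
  unfolding UNIV4 by (simp add: distinct4 add.assoc)
lemma prod4: "(\<Prod>i\<in>(UNIV::4 set). f i) = f 0 * f 1 * f 2 * f 3"
  unfolding UNIV4 by (simp add: distinct4 mult.assoc)
lemma forall4: "(\<forall>i::4. P i) \<longleftrightarrow> P 0 \<and> P 1 \<and> P 2 \<and> P 3"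
  using exh4 by metis
lemma mat_eq4: "(A::'a^4^4) = B \<longleftrightarrow> (\<forall>i j. A$i$j = B$i$j)"
  by (simp add: vec_eq_iff)

definition Jm :: cmat4 where
  "Jm = (\<chi> i j. if i = 0 \<and> j = 3 \<or> i = 1 \<and> j = 2 \<or> i = 2 \<and> j = 1 \<or> i = 3 \<and> j = 0 then 1 else 0)"
definition SOJ :: "cmat4 set" where
  "SOJ = {N. transpose N ** Jm ** N = Jm \<and> det N = 1}"

lemma TJN: "(transpose N ** Jm ** N) $ i $ j = N$0$i * N$3$j + N$1$i * N$2$j + N$2$i * N$1$j + N$3$i * N$0$j"
  by (simp add: matrix_matrix_mult_def sum4 transpose_def Jm_def distinct4)

definition NF :: "complex \<Rightarrow> complex \<Rightarrow> cmat4" where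
  "NF x r = (\<chi> i j. if i = 0 \<and> j = 3 then 1/x else if i = 1 \<and> j = 2 then 1/r
      else if i = 2 \<and> j = 1 then r else if i = 3 \<and> j = 0 then x else 0)"




lemma Jm_entries: "Jm$0$0 = 0" "Jm$0$1 = 0" "Jm$0$2 = 0" "Jm$0$3 = 1"
  "Jm$1$0 = 0" "Jm$1$1 = 0" "Jm$1$2 = 1" "Jm$1$3 = 0"
  "Jm$2$0 = 0" "Jm$2$1 = 1" "Jm$2$2 = 0" "Jm$2$3 = 0"
  "Jm$3$0 = 1" "Jm$3$1 = 0" "Jm$3$2 = 0" "Jm$3$3 = 0"
  by (simp_all add: Jm_def distinct4)

lemma det_swap03:
  fixes x a b :: complex
  shows "det (\<chi> i j. if i = 0 \<and> j = 3 then y else if i = 1 \<and> j = 1 then a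
      else if i = 2 \<and> j = 2 then b else if i = 3 \<and> j = 0 then x else 0 :: cmat4) = - (x*y*a*b)"
proof -
  let ?p = "Transposition.transpose (0::4) 3"
  let ?D = "(\<chi> i j. if i = j then (if i = 0 then x else if i = 1 then a else if i = 2 then b else y) else 0) :: cmat4"
  have pp: "?p permutes UNIV" by (rule permutes_swap_id) auto
  have eq: "(\<chi> i j. if i = 0 \<and> j = 3 then y else if i = 1 \<and> j = 1 then a
      else if i = 2 \<and> j = 2 then b else if i = 3 \<and> j = 0 then x else 0 :: cmat4) = (\<chi> i. ?D $ ?p i)"
    unfolding mat_eq4 forall4 by (simp add: distinct4 Transposition.transpose_def)
  have dD: "det ?D = x * a * b * y"
    by (subst det_diagonal) (auto simp: prod4 distinct4)
  have sp: "sign ?p = -1" by (simp add: sign_swap_id)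
  show ?thesis unfolding eq det_permute_rows[OF pp] dD sp by simp
qed

lemma struct_SOJ:
  assumes T: "transpose N ** Jm ** N = Jm" and D: "det N = 1"
    and z: "N$1$0 = 0" "N$2$0 = 0" "N$3$1 = 0" "N$3$2 = 0" and x: "N$3$0 \<noteq> 0"
  shows "N = NF (N$3$0) (N$2$1) \<and> N$2$1 \<noteq> 0"
proof -
  have E: "N$0$i * N$3$j + N$1$i * N$2$j + N$2$i * N$1$j + N$3$i * N$0$j = Jm$i$j" for i j
    using T TJN[of N i j] by simp

  have n00: "N$0$0 = 0" using E[of 0 0] x z by (simp add: Jm_entries)
  have n01: "N$0$1 = 0" using E[of 0 1] x z by (simp add: Jm_entries z)
  have n02: "N$0$2 = 0" using E[of 0 2] x z by (simp add: Jm_entries z)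
  have n03: "N$0$3 = 1 / N$3$0" using E[of 0 3] x z n00 by (simp add: Jm_entries z field_simps)
  have e11: "N$1$1 * N$2$1 = 0" using E[of 1 1] z n01 by (simp add: Jm_entries z)
  have e22: "N$1$2 * N$2$2 = 0" using E[of 2 2] z n02 by (simp add: Jm_entries z)
  have e12: "N$1$1 * N$2$2 + N$2$1 * N$1$2 = 1" using E[of 1 2] z n01 n02 by (simp add: Jm_entries z algebra_simps)
  have e13: "N$1$1 * N$2$3 + N$2$1 * N$1$3 = 0" using E[of 1 3] z n01 by (simp add: Jm_entries z algebra_simps)
  have e23: "N$1$2 * N$2$3 + N$2$2 * N$1$3 = 0" using E[of 2 3] z n02 by (simp add: Jm_entries z algebra_simps)
  have "2 * (N$0$3 * N$3$3 + N$1$3 * N$2$3) = 0" using E[of 3 3] by (simp add: Jm_entries z algebra_simps)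
  then have e33: "N$0$3 * N$3$3 + N$1$3 * N$2$3 = 0" by (subst (asm) mult_eq_0_iff) simp
  show ?thesis
  proof (cases "N$1$1 = 0")
    case True
    then have a: "N$2$1 * N$1$2 = 1" using e12 by simp
    then have nz: "N$2$1 \<noteq> 0" "N$1$2 \<noteq> 0" by auto
    have n22: "N$2$2 = 0" using e22 nz by simp
    moreover have "N$1$3 = 0" using e13 True nz by simp
    moreover have "N$2$3 = 0" using e23 nz n22 by simp
    moreover have "N$3$3 = 0" using e33 n03 x \<open>N$1$3 = 0\<close> by simp
    moreover have "N$1$2 = 1 / N$2$1" using a nz by (simp add: field_simps)
    ultimately show ?thesis using True nz n00 n01 n02 n03 z x
      unfolding mat_eq4 forall4 by (simp add: NF_def distinct4)
  next
    case False
    then have r: "N$2$1 = 0" using e11 by simp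
    then have a: "N$1$1 * N$2$2 = 1" using e12 by simp
    then have nz: "N$2$2 \<noteq> 0" by auto
    have "N$1$2 = 0" using e22 nz by simp
    moreover have "N$2$3 = 0" using e13 r False by simp
    moreover have "N$1$3 = 0" using e23 nz \<open>N$1$2 = 0\<close> by simp
    moreover have "N$3$3 = 0" using e33 n03 x \<open>N$1$3 = 0\<close> by simp
    ultimately have Neq: "N = (\<chi> i j. if i = 0 \<and> j = 3 then N$0$3 else if i = 1 \<and> j = 1 then N$1$1
      else if i = 2 \<and> j = 2 then N$2$2 else if i = 3 \<and> j = 0 then N$3$0 else 0 :: cmat4)"
      using r n00 n01 n02 z unfolding mat_eq4 forall4 by (simp add: distinct4)
    have "\<exists>yy aa bb xx. N = (\<chi> i j. if i = 0 \<and> j = 3 then yy else if i = 1 \<and> j = 1 then aa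
      else if i = 2 \<and> j = 2 then bb else if i = 3 \<and> j = 0 then xx else 0 :: cmat4) \<and>
      yy = N$0$3 \<and> aa = N$1$1 \<and> bb = N$2$2 \<and> xx = N$3$0"
      using Neq by blast
    then obtain yy aa bb xx where Ne: "N = (\<chi> i j. if i = 0 \<and> j = 3 then yy else if i = 1 \<and> j = 1 then aa
      else if i = 2 \<and> j = 2 then bb else if i = 3 \<and> j = 0 then xx else 0 :: cmat4)"
      and vals: "yy = N$0$3" "aa = N$1$1" "bb = N$2$2" "xx = N$3$0" by blast
    have "det N = - (xx * yy * aa * bb)" unfolding Ne by (rule det_swap03)
    also have "\<dots> = -1" using n03 x a vals by (simp add: field_simps)
    finally show ?thesis using D by simp
  qed
qed



definition Pinv :: cmat4 where
  "Pinv = (\<chi> i j.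
     if i = 0 then (if j = 0 then 1/2 else if j = 1 then - \<i>/2 else 0)
     else if i = 1 then (if j = 2 then 1/2 else if j = 3 then - \<i>/2 else 0)
     else if i = 2 then (if j = 2 then 1/2 else if j = 3 then \<i>/2 else 0)
     else (if j = 0 then 1/2 else if j = 1 then \<i>/2 else 0))"

lemma P_Pinv: "Pmat ** Pinv = mat 1"
  unfolding mat_eq4 forall4
  by (simp add: matrix_matrix_mult_def sum4 Pmat_def Pinv_def mat_def distinct4 field_simps)

lemma Pinv_P: "Pinv ** Pmat = mat 1"
  unfolding mat_eq4 forall4
  by (simp add: matrix_matrix_mult_def sum4 Pmat_def Pinv_def mat_def distinct4 field_simps)

lemma TPP: "transpose Pmat ** Pmat = (2::real) *\<^sub>R Jm"
  unfolding mat_eq4 forall4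
  by (simp add: matrix_matrix_mult_def sum4 Pmat_def Jm_def transpose_def distinct4 field_simps scaleR_conv_of_real)

lemma detP: "det Pinv * det Pmat = 1"
  by (metis Pinv_P det_I det_mul)

lemma conj_back: "Pmat ** (Pinv ** M ** Pmat) ** Pinv = M"
  by (metis P_Pinv matrix_mul_assoc matrix_mul_lid matrix_mul_rid)

lemma conj_fwd: "Pinv ** (Pmat ** N ** Pinv) ** Pmat = N"
  by (metis Pinv_P matrix_mul_assoc matrix_mul_lid matrix_mul_rid)

lemma TPinvTP: "transpose Pinv ** transpose Pmat = mat 1"
  by (metis P_Pinv matrix_transpose_mul transpose_mat)

lemma key_conj:
  "transpose (Pinv ** M ** Pmat) ** (transpose Pmat ** Pmat) ** (Pinv ** M ** Pmat)
     = transpose Pmat ** (transpose M ** M) ** Pmat"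
proof -
  have "transpose (Pinv ** M ** Pmat) = transpose Pmat ** transpose M ** transpose Pinv"
    by (simp add: matrix_transpose_mul matrix_mul_assoc)
  then have "transpose (Pinv ** M ** Pmat) ** (transpose Pmat ** Pmat) ** (Pinv ** M ** Pmat)
     = transpose Pmat ** transpose M ** (transpose Pinv ** transpose Pmat) ** (Pmat ** Pinv) ** M ** Pmat"
    by (simp add: matrix_mul_assoc)
  also have "\<dots> = transpose Pmat ** (transpose M ** M) ** Pmat"
    by (simp add: TPinvTP P_Pinv matrix_mul_assoc)
  finally show ?thesis .
qed

lemma SO4_iff_SOJ: "M \<in> SO4 \<longleftrightarrow> Pinv ** M ** Pmat \<in> SOJ"
proof -
  let ?N = "Pinv ** M ** Pmat"
  have d: "det ?N = det M" using detP by (simp add: det_mul algebra_simps)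
  have "transpose ?N ** Jm ** ?N = Jm \<longleftrightarrow>
        transpose ?N ** (transpose Pmat ** Pmat) ** ?N = transpose Pmat ** Pmat"
    unfolding TPP by (simp add: scalar_matrix_assoc[symmetric] matrix_scalar_ac)
  also have "\<dots> \<longleftrightarrow> transpose Pmat ** (transpose M ** M) ** Pmat = transpose Pmat ** mat 1 ** Pmat"
    unfolding key_conj by simp
  also have "\<dots> \<longleftrightarrow> transpose M ** M = mat 1"
  proof
    assume h: "transpose Pmat ** (transpose M ** M) ** Pmat = transpose Pmat ** mat 1 ** Pmat"
    have "transpose Pinv ** (transpose Pmat ** (transpose M ** M) ** Pmat) ** Pinv
        = transpose Pinv ** (transpose Pmat ** mat 1 ** Pmat) ** Pinv" using h by simp
    then show "transpose M ** M = mat 1"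
      by (simp add: matrix_mul_assoc TPinvTP) (simp add: matrix_mul_assoc[symmetric] P_Pinv)
  qed simp
  finally show ?thesis unfolding SO4_def SOJ_def using d by auto
qed



definition hU :: "complex \<Rightarrow> complex \<Rightarrow> cmat4" where
  "hU a b = (\<chi> i j. if i = j then 1 else if i = 0 \<and> j = 1 then a else if i = 0 \<and> j = 2 then b
     else if i = 0 \<and> j = 3 then - (a * b) else if i = 1 \<and> j = 3 then - b
     else if i = 2 \<and> j = 3 then - a else 0)"

definition nL :: "complex \<Rightarrow> complex \<Rightarrow> cmat4" where
  "nL a b = transpose (hU a b)"

lemma less4: "(0::4) < 1" "(0::4) < 2" "(0::4) < 3" "(1::4) < 2" "(1::4) < 3" "(2::4) < 3"
  "\<not> (1::4) < 0" "\<not> (2::4) < 0" "\<not> (3::4) < 0" "\<not> (2::4) < 1" "\<not> (3::4) < 1" "\<not> (3::4) < 2"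
  "\<not> (0::4) < 0" "\<not> (1::4) < 1" "\<not> (2::4) < 2" "\<not> (3::4) < 3"
  by (simp_all add: less_bit0_def bit0.Rep_numeral bit0.Rep_0 bit0.Rep_1)

lemma hU_mult: "hU a b ** hU a' b' = hU (a + a') (b + b')"
  unfolding mat_eq4 forall4
  by (simp add: matrix_matrix_mult_def sum4 hU_def distinct4 algebra_simps)

lemma PinvP_r: "A ** Pinv ** Pmat = A"
  by (metis Pinv_P matrix_mul_assoc matrix_mul_rid)
lemma PPinv_r: "A ** Pmat ** Pinv = A"
  by (metis P_Pinv matrix_mul_assoc matrix_mul_rid)

lemma hU_0: "hU 0 0 = mat 1"
  unfolding mat_eq4 forall4 by (simp add: hU_def mat_def distinct4)

lemma hU_J: "transpose (hU a b) ** Jm ** hU a b = Jm"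
  unfolding mat_eq4 forall4 TJN
  by (simp add: hU_def Jm_def distinct4 algebra_simps)

lemma nL_J: "transpose (nL a b) ** Jm ** nL a b = Jm"
  unfolding mat_eq4 forall4 TJN
  by (simp add: nL_def transpose_def hU_def Jm_def distinct4 algebra_simps)

lemma det_hU: "det (hU a b) = 1"
  by (subst det_upperdiagonal) (auto simp: hU_def prod4 distinct4 less4)

lemma det_nL: "det (nL a b) = 1"
  by (simp add: nL_def det_hU)

lemma hU_SOJ: "hU a b \<in> SOJ" and nL_SOJ: "nL a b \<in> SOJ"
  by (simp_all add: SOJ_def hU_J nL_J det_hU det_nL)

lemma SOJ_mult: assumes "A \<in> SOJ" "B \<in> SOJ" shows "A ** B \<in> SOJ"
proof -
  have "transpose (A ** B) ** Jm ** (A ** B) = transpose B ** (transpose A ** Jm ** A) ** B"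
    by (simp add: matrix_transpose_mul matrix_mul_assoc)
  also have "\<dots> = Jm" using assms by (simp add: SOJ_def)
  finally show ?thesis using assms by (simp add: SOJ_def det_mul)
qed

lemma mneg_SOJ: "mat (-1) \<in> SOJ"
proof -
  have "transpose (mat (-1)) ** Jm ** mat (-1) = (Jm::cmat4)"
    unfolding mat_eq4 forall4 TJN by (simp add: mat_def Jm_def distinct4)
  moreover have "det (mat (-1) :: cmat4) = 1"
    by (subst det_diagonal) (auto simp: mat_def prod4)
  ultimately show ?thesis by (simp add: SOJ_def)
qed

lemma upper_hU: "upper_unitriangular (hU a b)"
  unfolding upper_unitriangular_def
proof (intro allI conjI impI)
  fix i j :: 4 assume "j < i" then show "hU a b $ i $ j = 0"
    using exh4[of i] exh4[of j] by (elim disjE) (simp_all add: hU_def less4)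
qed (simp add: hU_def)

lemma matrix_inv_eq: assumes "A ** B = mat 1" "B ** A = mat 1" shows "matrix_inv A = (B::cmat4)"
proof -
  have ex: "\<exists>A'. A ** A' = mat 1 \<and> A' ** A = mat 1" using assms by blast
  have s: "A ** matrix_inv A = mat 1 \<and> matrix_inv A ** A = mat 1"
    unfolding matrix_inv_def by (rule someI_ex[OF ex])
  have "matrix_inv A = matrix_inv A ** (A ** B)" using assms by simp
  also have "\<dots> = B" using s by (simp add: matrix_mul_assoc)
  finally show ?thesis .
qed

definition gU :: "complex \<Rightarrow> complex \<Rightarrow> cmat4" where
  "gU a b = Pmat ** hU a b ** Pinv"

lemma gU_mult: "gU a b ** gU a' b' = gU (a + a') (b + b')"
proof -
  have "gU a b ** gU a' b' = Pmat ** hU a b ** (Pinv ** Pmat) ** hU a' b' ** Pinv"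
    by (simp add: gU_def matrix_mul_assoc)
  also have "\<dots> = Pmat ** (hU a b ** hU a' b') ** Pinv" unfolding Pinv_P by (simp add: matrix_mul_assoc)
  finally show ?thesis by (simp add: hU_mult gU_def)
qed

lemma gU_0: "gU 0 0 = mat 1"
  by (simp add: gU_def hU_0 P_Pinv)

lemma matrix_inv_gU: "matrix_inv (gU a b) = gU (-a) (-b)"
  by (rule matrix_inv_eq) (simp_all add: gU_mult gU_0)

lemma gU_in: "gU a b \<in> U_SO4"
proof -
  have "gU a b \<in> SO4" unfolding SO4_iff_SOJ gU_def conj_fwd by (rule hU_SOJ)
  moreover have "gU a b ** Pmat = Pmat ** hU a b"
    by (simp add: gU_def matrix_mul_assoc[symmetric] Pinv_P)
  ultimately show ?thesis unfolding U_SO4_def using upper_hU by blast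
qed

lemma U_SO4_char: assumes "g \<in> U_SO4" shows "\<exists>a b. g = gU a b"
proof -
  obtain h where g: "g \<in> SO4" and u: "upper_unitriangular h" and gh: "g ** Pmat = Pmat ** h"
    using assms unfolding U_SO4_def by blast
  have hN: "h = Pinv ** g ** Pmat"
  proof -
    have "Pinv ** g ** Pmat = Pinv ** (g ** Pmat)" by (simp add: matrix_mul_assoc)
    also have "\<dots> = (Pinv ** Pmat) ** h" unfolding gh by (simp add: matrix_mul_assoc)
    finally show ?thesis by (simp add: Pinv_P)
  qed
  have "h \<in> SOJ" using g hN SO4_iff_SOJ by simp
  then have T: "transpose h ** Jm ** h = Jm" by (simp add: SOJ_def)
  have E: "h$0$i * h$3$j + h$1$i * h$2$j + h$2$i * h$1$j + h$3$i * h$0$j = Jm$i$j" for i j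
    using T TJN[of h i j] by simp
  have z: "h$1$0 = 0" "h$2$0 = 0" "h$3$0 = 0" "h$2$1 = 0" "h$3$1 = 0" "h$3$2 = 0"
    and o: "h$0$0 = 1" "h$1$1 = 1" "h$2$2 = 1" "h$3$3 = 1"
    using u unfolding upper_unitriangular_def by (simp_all add: less4)
  have "2 * h$1$2 = 0" using E[of 2 2] z o by (simp add: Jm_entries)
  then have e: "h$1$2 = 0" by simp
  have "h$0$1 + h$2$3 = 0" using E[of 1 3] z o by (simp add: Jm_entries algebra_simps)
  then have g2: "h$2$3 = - h$0$1" by (simp add: eq_neg_iff_add_eq_0 add.commute)
  have "h$0$2 + h$1$3 = 0" using E[of 2 3] z o e by (simp add: Jm_entries algebra_simps)
  then have f: "h$1$3 = - h$0$2" by (simp add: eq_neg_iff_add_eq_0 add.commute)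
  have "2 * (h$0$3 + h$1$3 * h$2$3) = 0" using E[of 3 3] z o by (simp add: Jm_entries algebra_simps)
  then have c: "h$0$3 = - (h$0$1 * h$0$2)" using f g2 by (subst (asm) mult_eq_0_iff) (simp add: eq_neg_iff_add_eq_0 mult.commute)
  have "h = hU (h$0$1) (h$0$2)"
    unfolding mat_eq4 forall4 using z o e g2 f c by (simp add: hU_def distinct4)
  then have "g = gU (h$0$1) (h$0$2)"
  proof -
    have "g = g ** Pmat ** Pinv" by (simp add: PPinv_r)
    also have "\<dots> = gU (h$0$1) (h$0$2)" unfolding gh gU_def using \<open>h = hU (h$0$1) (h$0$2)\<close> by simp
    finally show ?thesis .
  qed
  then show ?thesis by blast
qed



definition h1N :: "cmat4 \<Rightarrow> cmat4" where
  "h1N N = hU (N$2$0 / N$3$0) (N$1$0 / N$3$0)"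
definition h2N :: "cmat4 \<Rightarrow> cmat4" where
  "h2N N = hU (- N$3$1 / N$3$0) (- N$3$2 / N$3$0)"
definition rr :: "cmat4 \<Rightarrow> complex" where
  "rr N = (h1N N ** N ** h2N N) $ 2 $ 1"

lemma mult3_entry: "(A ** N ** B) $ i $ j = (\<Sum>k\<in>UNIV. \<Sum>l\<in>UNIV. A$i$k * N$k$l * B$l$j)"
  by (simp add: matrix_matrix_mult_def sum_distrib_right sum_distrib_left mult.assoc) (rule sum.swap)

lemma gen_NF:
  assumes N: "N \<in> SOJ" and x: "N$3$0 \<noteq> 0"
  shows "h1N N ** N ** h2N N = NF (N$3$0) (rr N) \<and> rr N \<noteq> 0"
proof -
  let ?N = "h1N N ** N ** h2N N"
  have S: "?N \<in> SOJ" using N by (simp add: h1N_def h2N_def SOJ_mult hU_SOJ)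
  have z: "?N$1$0 = 0" "?N$2$0 = 0" "?N$3$1 = 0" "?N$3$2 = 0" and xx: "?N$3$0 = N$3$0"
    using x by (simp_all add: mult3_entry sum4 h1N_def h2N_def hU_def distinct4 field_simps)
  have "?N = NF (?N$3$0) (?N$2$1) \<and> ?N$2$1 \<noteq> 0"
    by (rule struct_SOJ) (use S z xx x in \<open>simp_all add: SOJ_def\<close>)
  then show ?thesis unfolding xx rr_def .
qed

lemma nL_entries: "nL a b $ 3 $ 0 = - (a * b)"
  by (simp add: nL_def transpose_def hU_def distinct4)

lemma rr_nL: assumes "a \<noteq> 0" "b \<noteq> 0" shows "rr (nL a b) = - b / a"
  using assms by (simp add: rr_def mult3_entry sum4 h1N_def h2N_def hU_def nL_def transpose_def distinct4 field_simps)

lemma neg_entries: "(- N) $ i $ j = - (N $ i $ j :: complex)"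
  by simp

lemma rr_neg_nL: assumes "a \<noteq> 0" "b \<noteq> 0" shows "rr (- nL a b) = b / a"
  using assms by (simp add: rr_def mult3_entry sum4 h1N_def h2N_def hU_def nL_def transpose_def distinct4 field_simps)

lemma neg_as_mult: "- (N::cmat4) = N ** mat (-1)"
  by (simp add: vec_eq_iff matrix_matrix_mult_def mat_def sum4 forall4 distinct4)

lemma neg_SOJ: "N \<in> SOJ \<Longrightarrow> - N \<in> SOJ"
  unfolding neg_as_mult by (rule SOJ_mult) (simp_all add: mneg_SOJ)



interpretation fs: vector_space fscale
  by unfold_locales (auto simp: fscale_def fun_eq_iff algebra_simps)

lemma sum_fun_app: "(sum f A) x = sum (\<lambda>a. f a x) A"
  by (induct A rule: infinite_finite_induct) auto

lemma fscale_app: "fscale c f x = c * f x"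
  by (simp add: fscale_def)

definition mono :: "(4 \<Rightarrow> 4 \<Rightarrow> nat) \<Rightarrow> cmat4 \<Rightarrow> complex" where
  "mono e = (\<lambda>M. \<Prod>i\<in>UNIV. \<Prod>j\<in>UNIV. (M $ i $ j) ^ (e i j))"

lemma mono_in: "(\<Sum>i\<in>UNIV. \<Sum>j\<in>UNIV. e i j) = d \<Longrightarrow> mono e \<in> monomials d"
  unfolding monomials_def mono_def by blast

lemma monomials_iff: "p \<in> monomials d \<longleftrightarrow> (\<exists>e. p = mono e \<and> (\<Sum>i\<in>UNIV. \<Sum>j\<in>UNIV. e i j) = d)"
  unfolding monomials_def mono_def by blast

lemma mono_mult: "(\<lambda>M. mono e1 M * mono e2 M) = mono (\<lambda>i j. e1 i j + e2 i j)"
  by (simp add: mono_def fun_eq_iff power_add prod.distrib)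

lemma prod_mono_in: assumes "p \<in> fs.span (monomials d1)" "q \<in> fs.span (monomials d2)"
  shows "(\<lambda>M. p M * q M) \<in> fs.span (monomials (d1 + d2))"
  using assms(1)
proof (induct rule: fs.span_induct_alt)
  case base
  then show ?case by (simp add: fs.span_zero flip: zero_fun_def)
next
  case (step c x y)
  from step(1) obtain e1 where x: "x = mono e1" and e1: "(\<Sum>i\<in>UNIV. \<Sum>j\<in>UNIV. e1 i j) = d1"
    unfolding monomials_iff by blast
  have xq: "(\<lambda>M. x M * q M) \<in> fs.span (monomials (d1 + d2))"
    using assms(2)
  proof (induct rule: fs.span_induct_alt)
    case base
    then show ?case by (simp add: fs.span_zero flip: zero_fun_def)
  next
    case (step c' x' y')
    from step(1) obtain e2 where x': "x' = mono e2" and e2: "(\<Sum>i\<in>UNIV. \<Sum>j\<in>UNIV. e2 i j) = d2"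
      unfolding monomials_iff by blast
    have "(\<lambda>M. x M * x' M) \<in> monomials (d1 + d2)"
      unfolding x x' mono_mult
      by (rule mono_in) (simp add: sum.distrib e1 e2)
    then have m: "(\<lambda>M. x M * x' M) \<in> fs.span (monomials (d1 + d2))" by (rule fs.span_base)
    have "fscale c' (\<lambda>M. x M * x' M) + (\<lambda>M. x M * y' M) \<in> fs.span (monomials (d1 + d2))"
      using step(2) m by (intro fs.span_add fs.span_scale)
    moreover have "fscale c' (\<lambda>M. x M * x' M) + (\<lambda>M. x M * y' M) = (\<lambda>M. x M * (fscale c' x' + y') M)"
      by (simp add: fun_eq_iff fscale_def algebra_simps)
    ultimately show ?case by simp
  qed
  have "fscale c (\<lambda>M. x M * q M) + (\<lambda>M. y M * q M) \<in> fs.span (monomials (d1 + d2))"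
    using step(2) xq by (intro fs.span_add fs.span_scale)
  moreover have "fscale c (\<lambda>M. x M * q M) + (\<lambda>M. y M * q M) = (\<lambda>M. (fscale c x + y) M * q M)"
    by (simp add: fun_eq_iff fscale_def algebra_simps)
  ultimately show ?case by simp
qed

lemma one_in: "(\<lambda>M. 1) \<in> fs.span (monomials 0)"
proof -
  have "mono (\<lambda>i j. 0) \<in> monomials 0" by (rule mono_in) simp
  moreover have "mono (\<lambda>i j. 0) = (\<lambda>M. 1)" by (simp add: mono_def fun_eq_iff)
  ultimately show ?thesis using fs.span_base by metis
qed

lemma pow_in: assumes "p \<in> fs.span (monomials d)"
  shows "(\<lambda>M. p M ^ k) \<in> fs.span (monomials (k * d))"
proof (induct k)
  case 0 then show ?case using one_in by simp
next
  case (Suc k)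
  have "(\<lambda>M. p M * p M ^ k) \<in> fs.span (monomials (d + k * d))"
    by (rule prod_mono_in[OF assms Suc])
  then show ?case by simp
qed

lemma ent_in: "(\<lambda>M. M $ i $ j) \<in> monomials 1"
proof -
  let ?e = "\<lambda>k l. if k = i \<and> l = j then 1 else (0::nat)"
  have "(\<Sum>k\<in>UNIV. \<Sum>l\<in>UNIV. ?e k l) = (\<Sum>k\<in>UNIV. if k = i then 1 else 0)"
    by (rule sum.cong) (auto simp: sum.delta)
  then have "mono ?e \<in> monomials 1"
    by (intro mono_in) (simp add: sum.delta)
  moreover have "mono ?e = (\<lambda>M. M $ i $ j)"
  proof
    fix M :: cmat4
    have "mono ?e M = (\<Prod>k\<in>UNIV. \<Prod>l\<in>UNIV. if k = i \<and> l = j then M $ k $ l else 1)"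
      unfolding mono_def by (intro prod.cong refl) auto
    also have "\<dots> = (\<Prod>k\<in>UNIV. if k = i then M $ k $ j else 1)"
      by (intro prod.cong refl) (auto simp: prod.delta)
    also have "\<dots> = M $ i $ j" by (simp add: prod.delta)
    finally show "mono ?e M = M $ i $ j" .
  qed
  ultimately show ?thesis by simp
qed

lemma lin_in: "(\<lambda>M. \<Sum>i\<in>UNIV. \<Sum>j\<in>UNIV. c i j * M $ i $ j) \<in> fs.span (monomials 1)"
proof -
  have "(\<Sum>i\<in>UNIV. \<Sum>j\<in>UNIV. fscale (c i j) (\<lambda>M. M $ i $ j)) \<in> fs.span (monomials 1)"
    by (intro fs.span_sum fs.span_scale fs.span_base ent_in)
  moreover have "(\<Sum>i\<in>UNIV. \<Sum>j\<in>UNIV. fscale (c i j) (\<lambda>M. M $ i $ j)) = (\<lambda>M. \<Sum>i\<in>UNIV. \<Sum>j\<in>UNIV. c i j * M $ i $ j)"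
    by (simp add: fun_eq_iff sum_fun_app fscale_def)
  ultimately show ?thesis by simp
qed

definition smat :: "complex \<Rightarrow> cmat4 \<Rightarrow> cmat4" where
  "smat c M = (\<chi> i j. c * M $ i $ j)"

lemma cone_iff: "M \<in> cone_SO4 \<longleftrightarrow> (\<exists>c M'. M = smat c M' \<and> M' \<in> SO4)"
  unfolding cone_SO4_def smat_def by blast

lemma smat_1: "smat 1 M = M"
  by (simp add: smat_def vec_eq_iff)

lemma SO4_cone: "M \<in> SO4 \<Longrightarrow> M \<in> cone_SO4"
  using cone_iff smat_1 by metis

lemma smat_smat: "smat c (smat c' M) = smat (c * c') M"
  by (simp add: smat_def vec_eq_iff mult.assoc)

lemma smat_cone: "M \<in> cone_SO4 \<Longrightarrow> smat c M \<in> cone_SO4"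
  unfolding cone_iff using smat_smat by metis

lemma smat_mult_l: "smat c A ** B = smat c (A ** B)"
  by (simp add: smat_def matrix_matrix_mult_def vec_eq_iff sum_distrib_left mult.assoc)

lemma smat_mult_r: "A ** smat c B = smat c (A ** B)"
  by (simp add: smat_def matrix_matrix_mult_def vec_eq_iff sum_distrib_left algebra_simps)

lemma hom_in: assumes "p \<in> fs.span (monomials d)" shows "p (smat c M) = c ^ d * p M"
  using assms
proof (induct rule: fs.span_induct_alt)
  case base then show ?case by simp
next
  case (step k x y)
  from step(1) obtain e where x: "x = mono e" and e: "(\<Sum>i\<in>UNIV. \<Sum>j\<in>UNIV. e i j) = d"
    unfolding monomials_iff by blast
  have "x (smat c M) = c ^ d * x M"
    unfolding x mono_def smat_def e[symmetric]
    by (simp add: power_mult_distrib prod.distrib power_sum)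
  then show ?case using step(2) by (simp add: fscale_def algebra_simps)
qed



definition ev :: "complex poly poly \<Rightarrow> complex \<Rightarrow> complex \<Rightarrow> complex" where
  "ev Q a b = poly (poly Q [:a:]) b"

definition bideg :: "complex poly poly \<Rightarrow> nat \<Rightarrow> bool" where
  "bideg Q D \<longleftrightarrow> degree Q \<le> D \<and> (\<forall>n. degree (coeff Q n) \<le> D)"

lemma ev_add: "ev (P + Q) a b = ev P a b + ev Q a b"
  by (simp add: ev_def)
lemma ev_mult: "ev (P * Q) a b = ev P a b * ev Q a b"
  by (simp add: ev_def)
lemma ev_prod: "ev (prod f S) a b = (\<Prod>i\<in>S. ev (f i) a b)"
  by (simp add: ev_def poly_prod)
lemma ev_power: "ev (Q ^ k) a b = ev Q a b ^ k"
  by (simp add: ev_def)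
lemma ev_const: "ev [:[:k:]:] a b = k"
  by (simp add: ev_def)
lemma ev_smult: "ev (smult [:c:] Q) a b = c * ev Q a b"
  by (simp add: ev_def)
lemma ev_zero: "ev 0 a b = 0"
  by (simp add: ev_def)
lemma ev_bil: "ev [:[:\<alpha>, \<gamma>:], [:\<beta>, \<delta>:]:] a b = \<alpha> + \<beta> * a + \<gamma> * b + \<delta> * a * b"
  by (simp add: ev_def algebra_simps)

lemma bideg_zero: "bideg 0 D" by (simp add: bideg_def)
lemma bideg_const: "bideg [:[:k:]:] 0" by (simp add: bideg_def coeff_pCons split: nat.split)
lemma bideg_bil: "bideg [:[:\<alpha>, \<gamma>:], [:\<beta>, \<delta>:]:] 1"
  unfolding bideg_def by (auto simp: coeff_pCons degree_pCons_le split: nat.split)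

lemma bideg_mono: "bideg Q D \<Longrightarrow> D \<le> D' \<Longrightarrow> bideg Q D'"
  unfolding bideg_def using le_trans by blast

lemma bideg_add: "bideg P D \<Longrightarrow> bideg Q D \<Longrightarrow> bideg (P + Q) D"
  unfolding bideg_def by (auto intro: order.trans[OF degree_add_le_max])

lemma bideg_mult: assumes "bideg P D1" "bideg Q D2" shows "bideg (P * Q) (D1 + D2)"
  unfolding bideg_def
proof (intro conjI allI)
  show "degree (P * Q) \<le> D1 + D2"
    using assms unfolding bideg_def by (meson add_mono degree_mult_le order.trans)
  fix n
  show "degree (coeff (P * Q) n) \<le> D1 + D2"
    unfolding coeff_mult
  proof (rule degree_sum_le)
    fix i show "degree (coeff P i * coeff Q (n - i)) \<le> D1 + D2"
      using assms unfolding bideg_def by (meson add_mono degree_mult_le order.trans)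
  qed simp
qed

lemma bideg_prod: "finite S \<Longrightarrow> (\<And>i. i \<in> S \<Longrightarrow> bideg (f i) (D i)) \<Longrightarrow> bideg (prod f S) (sum D S)"
proof (induct S rule: finite_induct)
  case empty
  then show ?case using bideg_const[of 1] by (simp add: pCons_one)
next
  case (insert x F)
  then show ?case by (simp add: bideg_mult)
qed

lemma bideg_power: "bideg Q D \<Longrightarrow> bideg (Q ^ k) (k * D)"
proof (induct k)
  case 0 then show ?case using bideg_const[of 1] by (simp add: pCons_one)
next
  case (Suc k) then show ?case using bideg_mult[of Q D "Q^k" "k*D"] by simp
qed

lemma fam_bideg:
  assumes ent: "\<And>i j. \<exists>Q. bideg Q 1 \<and> (\<forall>a b. \<Phi> a b $ i $ j = ev Q a b)"
    and p: "p \<in> fs.span (monomials d)"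
  shows "\<exists>Q. bideg Q d \<and> (\<forall>a b. p (\<Phi> a b) = ev Q a b)"
proof -
  from ent obtain Qf where Qf: "\<And>i j. bideg (Qf i j) 1 \<and> (\<forall>a b. \<Phi> a b $ i $ j = ev (Qf i j) a b)"
    by metis
  show ?thesis using p
  proof (induct rule: fs.span_induct_alt)
    case base
    then show ?case by (intro exI[of _ 0]) (simp add: bideg_zero ev_zero)
  next
    case (step c x y)
    from step(1) obtain e where x: "x = mono e" and e: "(\<Sum>i\<in>UNIV. \<Sum>j\<in>UNIV. e i j) = d"
      unfolding monomials_iff by blast
    from step(2) obtain Qy where Qy: "bideg Qy d" "\<forall>a b. y (\<Phi> a b) = ev Qy a b" by blast
    let ?Qx = "\<Prod>i\<in>UNIV. \<Prod>j\<in>UNIV. (Qf i j) ^ (e i j)"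
    have bx: "bideg ?Qx (\<Sum>i\<in>UNIV. \<Sum>j\<in>UNIV. e i j * 1)"
      by (intro bideg_prod bideg_power) (use Qf in auto)
    have vx: "x (\<Phi> a b) = ev ?Qx a b" for a b
      unfolding x mono_def using Qf by (simp add: ev_prod ev_power)
    let ?Q = "[:[:c:]:] * ?Qx + Qy"
    have "bideg ?Q d"
      using bideg_mult[OF bideg_const[of c] bx] Qy(1) e by (intro bideg_add) simp_all
    moreover have "(fscale c x + y) (\<Phi> a b) = ev ?Q a b" for a b
      using vx Qy(2) by (simp add: fscale_def ev_add ev_smult)
    ultimately show ?case by blast
  qed
qed

lemma fam_poly:
  assumes ent: "\<And>i j. \<exists>q. \<forall>t. \<Phi> t $ i $ j = poly q t"
    and p: "p \<in> fs.span (monomials d)"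
  shows "\<exists>q. \<forall>t. p (\<Phi> t) = poly q t"
proof -
  from ent obtain qf where qf: "\<And>i j. \<forall>t. \<Phi> t $ i $ j = poly (qf i j) t"
    by metis
  show ?thesis using p
  proof (induct rule: fs.span_induct_alt)
    case base
    then show ?case by (intro exI[of _ 0]) simp
  next
    case (step c x y)
    from step(1) obtain e where x: "x = mono e"
      unfolding monomials_iff by blast
    from step(2) obtain qy where qy: "\<forall>t. y (\<Phi> t) = poly qy t" by blast
    let ?qx = "\<Prod>i\<in>UNIV. \<Prod>j\<in>UNIV. (qf i j) ^ (e i j)"
    have vx: "x (\<Phi> t) = poly ?qx t" for t
      unfolding x mono_def using qf by (simp add: poly_prod)
    have "(fscale c x + y) (\<Phi> t) = poly ([:c:] * ?qx + qy) t" for t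
      using vx qy by (simp add: fscale_def)
    then show ?case by blast
  qed
qed

lemma poly_altdef_le: fixes p :: "'a::comm_semiring_1 poly" assumes "degree p \<le> D" shows "poly p x = (\<Sum>i\<le>D. coeff p i * x ^ i)"
proof -
  have "poly p x = (\<Sum>i\<le>degree p. coeff p i * x ^ i)" by (rule poly_altdef)
  also have "\<dots> = (\<Sum>i\<le>D. coeff p i * x ^ i)"
    by (rule sum.mono_neutral_left) (use assms in \<open>auto simp: coeff_eq_0\<close>)
  finally show ?thesis .
qed

lemma ev_sum: assumes "bideg Q D"
  shows "ev Q a b = (\<Sum>n\<le>D. \<Sum>m\<le>D. coeff (coeff Q n) m * a ^ n * b ^ m)"
proof -
  have d1: "degree Q \<le> D" and d2: "\<And>n. degree (coeff Q n) \<le> D" using assms by (auto simp: bideg_def)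
  have "ev Q a b = poly (\<Sum>n\<le>D. coeff Q n * [:a:] ^ n) b"
    unfolding ev_def poly_altdef_le[OF d1] ..
  also have "\<dots> = (\<Sum>n\<le>D. poly (coeff Q n) b * a ^ n)"
    by (simp add: poly_sum)
  also have "\<dots> = (\<Sum>n\<le>D. (\<Sum>m\<le>D. coeff (coeff Q n) m * b ^ m) * a ^ n)"
    by (rule sum.cong[OF refl]) (simp add: poly_altdef_le[OF d2])
  also have "\<dots> = (\<Sum>n\<le>D. \<Sum>m\<le>D. coeff (coeff Q n) m * a ^ n * b ^ m)"
    unfolding sum_distrib_right by (rule sum.cong[OF refl], rule sum.cong[OF refl]) (simp add: algebra_simps)
  finally show ?thesis .
qed

lemma infinite_nonzero: "infinite {a::complex. a \<noteq> 0}"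
proof -
  have "{a::complex. a \<noteq> 0} = UNIV - {0}" by auto
  then show ?thesis using infinite_UNIV_char_0 by (metis finite_Diff2 finite.emptyI finite_insert)
qed

lemma sum1_zero:
  assumes "\<And>a::complex. a \<noteq> 0 \<Longrightarrow> (\<Sum>n\<le>D. c n * a ^ n) = 0" "n \<le> D"
  shows "c n = 0"
proof -
  let ?q = "\<Sum>k\<le>D. monom (c k) k"
  have pq: "poly ?q a = (\<Sum>k\<le>D. c k * a ^ k)" for a by (simp add: poly_sum poly_monom)
  have "?q = 0"
  proof (rule ccontr)
    assume "?q \<noteq> 0"
    then have "finite {a. poly ?q a = 0}" by (rule poly_roots_finite)
    moreover have "{a::complex. a \<noteq> 0} \<subseteq> {a. poly ?q a = 0}" using assms(1) pq by auto
    ultimately show False using infinite_nonzero finite_subset by blast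
  qed
  then have "coeff ?q n = 0" by simp
  moreover have "coeff ?q n = c n" using assms(2) by (simp add: coeff_sum coeff_monom)
  ultimately show ?thesis by simp
qed

lemma sum2_zero:
  assumes "\<And>a b::complex. a \<noteq> 0 \<Longrightarrow> b \<noteq> 0 \<Longrightarrow> (\<Sum>n\<le>D. \<Sum>m\<le>D. C n m * a ^ n * b ^ m) = 0"
    "n \<le> D" "m \<le> D"
  shows "C n m = 0"
proof -
  have "(\<Sum>m\<le>D. C n m * b ^ m) = 0" if b: "b \<noteq> 0" for b :: complex
  proof (rule sum1_zero[where c = "\<lambda>n. \<Sum>m\<le>D. C n m * b ^ m", OF _ assms(2)])
    fix a :: complex assume "a \<noteq> 0"
    then have "(\<Sum>n\<le>D. \<Sum>m\<le>D. C n m * a ^ n * b ^ m) = 0" using assms(1) b by blast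
    moreover have "(\<Sum>n\<le>D. (\<Sum>m\<le>D. C n m * b ^ m) * a ^ n) = (\<Sum>n\<le>D. \<Sum>m\<le>D. C n m * a ^ n * b ^ m)"
      unfolding sum_distrib_right by (rule sum.cong[OF refl], rule sum.cong[OF refl]) (simp add: algebra_simps)
    ultimately show "(\<Sum>n\<le>D. (\<Sum>m\<le>D. C n m * b ^ m) * a ^ n) = 0" by simp
  qed
  then show ?thesis using sum1_zero[where c = "C n", OF _ assms(3)] by (simp add: mult.commute)
qed



definition Nc :: "cmat4 \<Rightarrow> cmat4" where "Nc M = Pinv ** M ** Pmat"
definition xN :: "cmat4 \<Rightarrow> complex" where "xN M = Nc M $ 3 $ 0"
definition yN :: "cmat4 \<Rightarrow> complex" where
  "yN M = Nc M $ 2 $ 0 * Nc M $ 3 $ 1 - Nc M $ 2 $ 1 * Nc M $ 3 $ 0"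
definition zN :: "cmat4 \<Rightarrow> complex" where
  "zN M = Nc M $ 1 $ 0 * Nc M $ 3 $ 2 - Nc M $ 1 $ 2 * Nc M $ 3 $ 0"
definition qN :: "cmat4 \<Rightarrow> complex" where
  "qN M = (\<Sum>i\<in>UNIV. \<Sum>j\<in>UNIV. (1/4) * (M $ i $ j * M $ i $ j))"

lemma Nent_in: "(\<lambda>M. Nc M $ r $ s) \<in> fs.span (monomials 1)"
proof -
  have "(\<lambda>M. Nc M $ r $ s) = (\<lambda>M. \<Sum>k\<in>UNIV. \<Sum>l\<in>UNIV. (Pinv$r$k * Pmat$l$s) * M $ k $ l)"
    unfolding Nc_def mult3_entry by (intro ext sum.cong refl) (simp add: ac_simps)
  then show ?thesis using lin_in by simp
qed

lemma diff_in: "f \<in> fs.span S \<Longrightarrow> g \<in> fs.span S \<Longrightarrow> (\<lambda>M. f M - g M) \<in> fs.span S"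
proof -
  assume a: "f \<in> fs.span S" "g \<in> fs.span S"
  have "(\<lambda>M. f M - g M) = f - g" by (simp add: fun_eq_iff)
  then show ?thesis using fs.span_diff[OF a] by simp
qed

lemma xN_in: "xN \<in> fs.span (monomials 1)"
  using Nent_in[of 3 0] by (simp add: xN_def[abs_def])

lemma yN_in: "yN \<in> fs.span (monomials 2)"
proof -
  have "(\<lambda>M. (\<lambda>M. Nc M $ 2 $ 0 * Nc M $ 3 $ 1) M - (\<lambda>M. Nc M $ 2 $ 1 * Nc M $ 3 $ 0) M) \<in> fs.span (monomials (1+1))"
    by (intro diff_in prod_mono_in Nent_in)
  then show ?thesis unfolding one_add_one by (simp add: yN_def[abs_def])
qed

lemma zN_in: "zN \<in> fs.span (monomials 2)"
proof -
  have "(\<lambda>M. (\<lambda>M. Nc M $ 1 $ 0 * Nc M $ 3 $ 2) M - (\<lambda>M. Nc M $ 1 $ 2 * Nc M $ 3 $ 0) M) \<in> fs.span (monomials (1+1))"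
    by (intro diff_in prod_mono_in Nent_in)
  then show ?thesis unfolding one_add_one by (simp add: zN_def[abs_def])
qed

lemma qN_in: "qN \<in> fs.span (monomials 2)"
proof -
  have e: "(\<lambda>M. M $ i $ j * M $ i $ j) \<in> fs.span (monomials (1+1))" for i j
    by (intro prod_mono_in fs.span_base ent_in)
  have "(\<Sum>i\<in>UNIV. \<Sum>j\<in>UNIV. fscale (1/4) (\<lambda>M. M $ i $ j * M $ i $ j)) \<in> fs.span (monomials 2)"
    using e[unfolded one_add_one] by (intro fs.span_sum fs.span_scale)
  moreover have "(\<Sum>i\<in>UNIV. \<Sum>j\<in>UNIV. fscale (1/4) (\<lambda>M. M $ i $ j * M $ i $ j)) = qN"
    by (simp add: fun_eq_iff sum_fun_app fscale_def qN_def)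
  ultimately show ?thesis by simp
qed

lemma qN_SO4: assumes "M \<in> SO4" shows "qN M = 1"
proof -
  have T: "(transpose M ** M) $ j $ j = 1" for j using assms by (simp add: SO4_def mat_def)
  have "qN M = (1/4) * (\<Sum>i\<in>UNIV. \<Sum>j\<in>UNIV. M $ i $ j * M $ i $ j)"
    unfolding qN_def by (simp add: sum_distrib_left)
  also have "\<dots> = (1/4) * (\<Sum>j\<in>UNIV. \<Sum>i\<in>UNIV. M $ i $ j * M $ i $ j)"
    by (subst sum.swap) (rule refl)
  also have "\<dots> = (1/4) * (\<Sum>j\<in>UNIV. (transpose M ** M) $ j $ j)"
    by (simp add: matrix_matrix_mult_def transpose_def)
  also have "\<dots> = 1" using T by (simp add: sum4)
  finally show ?thesis .
qed

lemma Nc_inv: "Nc (gU a1 b1 ** M ** matrix_inv (gU a2 b2)) = hU a1 b1 ** Nc M ** hU (-a2) (-b2)"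
  unfolding matrix_inv_gU by (simp add: Nc_def gU_def matrix_mul_assoc PinvP_r Pinv_P)

lemma hU_ent: "(hU a b ** N ** hU c d) $ 3 $ 0 = N $ 3 $ 0"
  "(hU a b ** N ** hU c d) $ 2 $ 0 = N $ 2 $ 0 - a * N $ 3 $ 0"
  "(hU a b ** N ** hU c d) $ 3 $ 1 = c * N $ 3 $ 0 + N $ 3 $ 1"
  "(hU a b ** N ** hU c d) $ 2 $ 1 = c * (N $ 2 $ 0 - a * N $ 3 $ 0) + N $ 2 $ 1 - a * N $ 3 $ 1"
  "(hU a b ** N ** hU c d) $ 1 $ 0 = N $ 1 $ 0 - b * N $ 3 $ 0"
  "(hU a b ** N ** hU c d) $ 3 $ 2 = d * N $ 3 $ 0 + N $ 3 $ 2"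
  "(hU a b ** N ** hU c d) $ 1 $ 2 = d * (N $ 1 $ 0 - b * N $ 3 $ 0) + N $ 1 $ 2 - b * N $ 3 $ 2"
  by (simp_all add: mult3_entry sum4 hU_def distinct4 algebra_simps)

lemma hU_inv_entries:
  "(hU a b ** N ** hU c d) $ 3 $ 0 = N $ 3 $ 0"
  "(hU a b ** N ** hU c d) $ 2 $ 0 * (hU a b ** N ** hU c d) $ 3 $ 1
     - (hU a b ** N ** hU c d) $ 2 $ 1 * (hU a b ** N ** hU c d) $ 3 $ 0
   = N $ 2 $ 0 * N $ 3 $ 1 - N $ 2 $ 1 * N $ 3 $ 0"
  "(hU a b ** N ** hU c d) $ 1 $ 0 * (hU a b ** N ** hU c d) $ 3 $ 2
     - (hU a b ** N ** hU c d) $ 1 $ 2 * (hU a b ** N ** hU c d) $ 3 $ 0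
   = N $ 1 $ 0 * N $ 3 $ 2 - N $ 1 $ 2 * N $ 3 $ 0"
  unfolding hU_ent by (simp_all add: algebra_simps)

lemma xyz_inv:
  "xN (gU a1 b1 ** M ** matrix_inv (gU a2 b2)) = xN M"
  "yN (gU a1 b1 ** M ** matrix_inv (gU a2 b2)) = yN M"
  "zN (gU a1 b1 ** M ** matrix_inv (gU a2 b2)) = zN M"
  unfolding xN_def yN_def zN_def Nc_inv by (rule hU_inv_entries)+

lemma SO4_act: "M \<in> SO4 \<Longrightarrow> gU a1 b1 ** M ** matrix_inv (gU a2 b2) \<in> SO4"
  unfolding SO4_iff_SOJ using Nc_inv[unfolded Nc_def]
  by (simp add: SOJ_mult hU_SOJ)

lemma cone_act: assumes "M \<in> cone_SO4"
  shows "\<exists>c M'. M = smat c M' \<and> M' \<in> SO4 \<and>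
     gU a1 b1 ** M ** matrix_inv (gU a2 b2) = smat c (gU a1 b1 ** M' ** matrix_inv (gU a2 b2)) \<and>
     gU a1 b1 ** M' ** matrix_inv (gU a2 b2) \<in> SO4"
proof -
  obtain c M' where M: "M = smat c M'" "M' \<in> SO4" using assms cone_iff by blast
  then show ?thesis using SO4_act[of M' a1 b1 a2 b2] by (auto simp: smat_mult_l smat_mult_r)
qed

lemma cone_act': "M \<in> cone_SO4 \<Longrightarrow> gU a1 b1 ** M ** matrix_inv (gU a2 b2) \<in> cone_SO4"
  using cone_act cone_iff by metis

lemma qN_inv: assumes "M \<in> cone_SO4"
  shows "qN (gU a1 b1 ** M ** matrix_inv (gU a2 b2)) = qN M"
proof -
  obtain c M' where M: "M = smat c M'" "M' \<in> SO4"
    and e: "gU a1 b1 ** M ** matrix_inv (gU a2 b2) = smat c (gU a1 b1 ** M' ** matrix_inv (gU a2 b2))"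
    and S: "gU a1 b1 ** M' ** matrix_inv (gU a2 b2) \<in> SO4"
    using cone_act[OF assms] by blast
  have "qN (gU a1 b1 ** M ** matrix_inv (gU a2 b2)) = c^2 * qN (gU a1 b1 ** M' ** matrix_inv (gU a2 b2))"
    unfolding e by (rule hom_in[OF qN_in])
  also have "\<dots> = c^2" using qN_SO4[OF S] by simp
  also have "\<dots> = qN M" unfolding M(1) hom_in[OF qN_in] qN_SO4[OF M(2)] by simp
  finally show ?thesis .
qed

definition Phi :: "complex \<Rightarrow> complex \<Rightarrow> cmat4" where
  "Phi a b = Pmat ** nL a b ** Pinv"

lemma Nc_Phi: "Nc (Phi a b) = nL a b"
  by (simp add: Nc_def Phi_def conj_fwd)

lemma Phi_SO4: "Phi a b \<in> SO4"
  unfolding SO4_iff_SOJ Phi_def conj_fwd by (rule nL_SOJ)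

lemma xyzq_Phi: "xN (Phi a b) = - (a * b)" "yN (Phi a b) = - (b ^ 2)" "zN (Phi a b) = - (a ^ 2)"
  "qN (Phi a b) = 1"
  by (simp_all add: xN_def yN_def zN_def Nc_Phi nL_def transpose_def hU_def distinct4 qN_SO4[OF Phi_SO4]
    power2_eq_square)



definition Fp :: "nat \<Rightarrow> nat \<Rightarrow> nat \<Rightarrow> cmat4 \<Rightarrow> complex" where
  "Fp d n m = (\<lambda>M. xN M ^ min n m * yN M ^ ((m - min n m) div 2) * zN M ^ ((n - min n m) div 2)
                   * qN M ^ ((d - max n m) div 2))"

definition Kset :: "nat \<Rightarrow> (nat \<times> nat) set" where
  "Kset d = {(n, m). n \<le> d \<and> m \<le> d \<and> even (d - n) \<and> even (d - m)}"

definition restr :: "(cmat4 \<Rightarrow> complex) \<Rightarrow> cmat4 \<Rightarrow> complex" where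
  "restr p = (\<lambda>M. if M \<in> cone_SO4 then p M else 0)"

definition sg :: "nat \<Rightarrow> nat \<Rightarrow> complex" where
  "sg n m = (-1) ^ (min n m + (m - min n m) div 2 + (n - min n m) div 2)"

lemma Kset_finite: "finite (Kset d)"
proof -
  have "Kset d \<subseteq> {..d} \<times> {..d}" by (auto simp: Kset_def)
  then show ?thesis using finite_subset by blast
qed

lemma Fp_in: assumes "(n, m) \<in> Kset d" shows "Fp d n m \<in> fs.span (monomials d)"
proof -
  have k: "min n m * 1 + ((m - min n m) div 2) * 2 + ((n - min n m) div 2) * 2 + ((d - max n m) div 2) * 2 = d"
    using assms unfolding Kset_def by (auto simp: min_def max_def; presburger)
  have A: "(\<lambda>M. xN M ^ min n m) \<in> fs.span (monomials (min n m * 1))" by (rule pow_in[OF xN_in])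
  have B: "(\<lambda>M. yN M ^ ((m - min n m) div 2)) \<in> fs.span (monomials (((m - min n m) div 2) * 2))" by (rule pow_in[OF yN_in])
  have C: "(\<lambda>M. zN M ^ ((n - min n m) div 2)) \<in> fs.span (monomials (((n - min n m) div 2) * 2))" by (rule pow_in[OF zN_in])
  have D: "(\<lambda>M. qN M ^ ((d - max n m) div 2)) \<in> fs.span (monomials (((d - max n m) div 2) * 2))" by (rule pow_in[OF qN_in])
  have "(\<lambda>M. (\<lambda>M. (\<lambda>M. xN M ^ min n m * yN M ^ ((m - min n m) div 2)) M * zN M ^ ((n - min n m) div 2)) M
     * qN M ^ ((d - max n m) div 2)) \<in> fs.span (monomials (min n m * 1 + ((m - min n m) div 2) * 2 + ((n - min n m) div 2) * 2 + ((d - max n m) div 2) * 2))"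
    using prod_mono_in[OF prod_mono_in[OF prod_mono_in[OF A B] C] D] by simp
  then show ?thesis unfolding k by (simp add: Fp_def)
qed

lemma Fp_inv: assumes "M \<in> cone_SO4" "g \<in> U_SO4" "k \<in> U_SO4"
  shows "Fp d n m (g ** M ** matrix_inv k) = Fp d n m M"
proof -
  obtain a1 b1 a2 b2 where g: "g = gU a1 b1" and k: "k = gU a2 b2"
    using U_SO4_char assms(2,3) by blast
  show ?thesis unfolding g k Fp_def xyz_inv qN_inv[OF assms(1)] ..
qed

lemma restr_in: assumes "(n, m) \<in> Kset d" shows "restr (Fp d n m) \<in> inv_deg d"
proof -
  have "restr (Fp d n m) \<in> coord_ring_deg d"
    unfolding coord_ring_deg_def hom_polys_def restr_def using Fp_in[OF assms] by blast
  moreover have "restr (Fp d n m) (g ** M ** matrix_inv h) = restr (Fp d n m) M"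
    if G: "g \<in> U_SO4" and H: "h \<in> U_SO4" and MM: "M \<in> cone_SO4" for g h M
  proof -
    obtain a2 b2 where h: "h = gU a2 b2" using U_SO4_char H by blast
    obtain a1 b1 where g: "g = gU a1 b1" using U_SO4_char G by blast
    have "g ** M ** matrix_inv h \<in> cone_SO4" unfolding g h by (rule cone_act'[OF MM])
    then show ?thesis using G H MM Fp_inv by (simp add: restr_def)
  qed
  ultimately show ?thesis unfolding inv_deg_def by blast
qed

lemma Fp_Phi: assumes "(n, m) \<in> Kset d"
  shows "Fp d n m (Phi a b) = sg n m * a ^ n * b ^ m"
proof -
  define mn where "mn = min n m"
  define k1 where "k1 = (m - mn) div 2"
  define k2 where "k2 = (n - mn) div 2"
  have nn: "n = mn + 2 * k2" and mm: "m = mn + 2 * k1"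
    using assms unfolding Kset_def mn_def k1_def k2_def
    by (cases "n \<le> m"; simp add: min_absorb1 min_absorb2; presburger)+
  have "Fp d n m (Phi a b) = (- (a * b)) ^ mn * (- (b^2)) ^ k1 * (- (a^2)) ^ k2"
    by (simp add: Fp_def xyzq_Phi mn_def k1_def k2_def)
  also have "\<dots> = (-1) ^ (mn + k1 + k2) * a ^ (mn + 2 * k2) * b ^ (mn + 2 * k1)"
  proof -
    have e1: "(- (a*b))^mn = (-1)^mn * a^mn * b^mn" by (simp add: power_minus[of "a*b"] power_mult_distrib)
    have e2: "(- (b^2))^k1 = (-1)^k1 * b^(2*k1)" by (simp add: power_minus[of "b^2"] power_mult)
    have e3: "(- (a^2))^k2 = (-1)^k2 * a^(2*k2)" by (simp add: power_minus[of "a^2"] power_mult)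
    show ?thesis unfolding e1 e2 e3 power_add by (simp only: mult_ac)
  qed
  also have "\<dots> = sg n m * a ^ n * b ^ m"
    unfolding sg_def mn_def[symmetric] k1_def[symmetric] k2_def[symmetric] nn[symmetric] mm[symmetric] ..
  finally show ?thesis .
qed



definition polyfun :: "(complex \<Rightarrow> complex) \<Rightarrow> bool" where
  "polyfun g \<longleftrightarrow> (\<exists>q. \<forall>t. g t = poly q t)"

lemma polyfun_const: "polyfun (\<lambda>t. c)"
  unfolding polyfun_def by (rule exI[of _ "[:c:]"]) simp
lemma polyfun_id: "polyfun (\<lambda>t. t)"
  unfolding polyfun_def by (rule exI[of _ "[:0, 1:]"]) simp
lemma polyfun_add: "polyfun f \<Longrightarrow> polyfun g \<Longrightarrow> polyfun (\<lambda>t. f t + g t)"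
  unfolding polyfun_def by (metis poly_add)
lemma polyfun_mult: "polyfun f \<Longrightarrow> polyfun g \<Longrightarrow> polyfun (\<lambda>t. f t * g t)"
  unfolding polyfun_def by (metis poly_mult)
lemma polyfun_minus: "polyfun f \<Longrightarrow> polyfun (\<lambda>t. - f t)"
  unfolding polyfun_def by (metis poly_minus)
lemma polyfun_if: "polyfun f \<Longrightarrow> polyfun g \<Longrightarrow> polyfun (\<lambda>t. if P then f t else g t)"
  by (cases P) simp_all
lemma polyfun_sum: "(\<And>i. i \<in> S \<Longrightarrow> polyfun (f i)) \<Longrightarrow> polyfun (\<lambda>t. \<Sum>i\<in>S. f i t)"
proof (induct S rule: infinite_finite_induct)
  case (infinite A) then show ?case by (simp add: polyfun_const)
next
  case empty then show ?case by (simp add: polyfun_const)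
next
  case (insert x F) then show ?case by (simp add: polyfun_add)
qed

lemmas polyfun_intros = polyfun_const polyfun_id polyfun_add polyfun_mult polyfun_minus polyfun_if polyfun_sum

lemma polyfun_nL: "polyfun (\<lambda>t. nL (\<alpha> * t) (\<beta> * t) $ k $ m)"
  unfolding nL_def transpose_def hU_def
  by (simp del: mult_minus_left mult_minus_right minus_mult_left minus_mult_right) (intro polyfun_intros)

lemma polyfun_curve: "polyfun (\<lambda>t. (Pmat ** (nL (\<alpha> * t) (\<beta> * t) ** N) ** Pinv) $ i $ j)"
  unfolding mult3_entry matrix_matrix_mult_def vec_lambda_beta
  by (intro polyfun_intros polyfun_nL)

definition bil :: "(complex \<Rightarrow> complex \<Rightarrow> complex) \<Rightarrow> bool" where
  "bil g \<longleftrightarrow> (\<exists>Q. bideg Q 1 \<and> (\<forall>a b. g a b = ev Q a b))"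

lemma bil_basic: "bil (\<lambda>a b. \<alpha> + \<beta> * a + \<gamma> * b + \<delta> * a * b)"
  unfolding bil_def using bideg_bil ev_bil by metis
lemma bil_const: "bil (\<lambda>a b. c)" using bil_basic[of c 0 0 0] by simp
lemma bil_a: "bil (\<lambda>a b. a)" using bil_basic[of 0 1 0 0] by simp
lemma bil_b: "bil (\<lambda>a b. b)" using bil_basic[of 0 0 1 0] by simp
lemma bil_ab: "bil (\<lambda>a b. a * b)" using bil_basic[of 0 0 0 1] by simp
lemma bil_add: "bil f \<Longrightarrow> bil g \<Longrightarrow> bil (\<lambda>a b. f a b + g a b)"
  unfolding bil_def by (metis bideg_add ev_add)
lemma bil_minus: "bil f \<Longrightarrow> bil (\<lambda>a b. - f a b)"
proof -
  assume "bil f"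
  then obtain Q where Q: "bideg Q 1" "\<forall>a b. f a b = ev Q a b" unfolding bil_def by blast
  have "bideg ([:[:-1:]:] * Q) (0 + 1)" by (rule bideg_mult[OF bideg_const Q(1)])
  moreover have "- f a b = ev ([:[:-1:]:] * Q) a b" for a b using Q(2) by (simp add: ev_smult)
  ultimately show ?thesis unfolding bil_def by auto
qed
lemma bil_cmult: "bil f \<Longrightarrow> bil (\<lambda>a b. c * f a b)"
proof -
  assume "bil f"
  then obtain Q where Q: "bideg Q 1" "\<forall>a b. f a b = ev Q a b" unfolding bil_def by blast
  have "bideg ([:[:c:]:] * Q) (0 + 1)" by (rule bideg_mult[OF bideg_const Q(1)])
  moreover have "c * f a b = ev ([:[:c:]:] * Q) a b" for a b using Q(2) by (simp add: ev_smult)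
  ultimately show ?thesis unfolding bil_def by auto
qed
lemma bil_multc: "bil f \<Longrightarrow> bil (\<lambda>a b. f a b * c)"
  using bil_cmult[of f c] by (simp add: mult.commute)
lemma bil_if: "bil f \<Longrightarrow> bil g \<Longrightarrow> bil (\<lambda>a b. if P then f a b else g a b)"
  by (cases P) simp_all
lemma bil_sum: "(\<And>i. i \<in> S \<Longrightarrow> bil (f i)) \<Longrightarrow> bil (\<lambda>a b. \<Sum>i\<in>S. f i a b)"
proof (induct S rule: infinite_finite_induct)
  case (infinite A) then show ?case by (simp add: bil_const)
next
  case empty then show ?case by (simp add: bil_const)
next
  case (insert x F) then show ?case by (simp add: bil_add)
qed

lemma bil_nL: "bil (\<lambda>a b. nL a b $ k $ m)"
  unfolding nL_def transpose_def hU_def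
  by (simp del: mult_minus_left mult_minus_right minus_mult_left minus_mult_right)
     (intro bil_if bil_const bil_a bil_b bil_minus bil_ab)

lemma bil_Phi: "bil (\<lambda>a b. Phi a b $ i $ j)"
  unfolding Phi_def mult3_entry
  by (intro bil_sum bil_multc bil_cmult bil_nL)

lemma Phi_rep: assumes "p \<in> fs.span (monomials d)"
  shows "\<exists>Q. bideg Q d \<and> (\<forall>a b. p (Phi a b) = ev Q a b)"
  by (rule fam_bideg[OF _ assms]) (use bil_Phi in \<open>auto simp: bil_def\<close>)



definition Inv :: "(cmat4 \<Rightarrow> complex) \<Rightarrow> bool" where
  "Inv f \<longleftrightarrow> (\<forall>g\<in>U_SO4. \<forall>h\<in>U_SO4. \<forall>M\<in>cone_SO4. f (g ** M ** matrix_inv h) = f M)"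

lemma SOJ_cone: "N \<in> SOJ \<Longrightarrow> Pmat ** N ** Pinv \<in> cone_SO4"
  by (rule SO4_cone) (simp add: SO4_iff_SOJ conj_fwd)

lemma gen_f: assumes f: "Inv f" and N: "N \<in> SOJ" and x: "N$3$0 \<noteq> 0"
  shows "f (Pmat ** N ** Pinv) = f (Pmat ** NF (N$3$0) (rr N) ** Pinv)"
proof -
  define a1 where "a1 = N$2$0 / N$3$0"
  define b1 where "b1 = N$1$0 / N$3$0"
  define a2 where "a2 = - N$3$1 / N$3$0"
  define b2 where "b2 = - N$3$2 / N$3$0"
  let ?M = "Pmat ** N ** Pinv"
  let ?X = "gU a1 b1 ** ?M ** matrix_inv (gU (-a2) (-b2))"
  have "Nc ?X = hU a1 b1 ** N ** hU a2 b2"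
    unfolding Nc_inv by (simp add: Nc_def conj_fwd)
  also have "\<dots> = NF (N$3$0) (rr N)"
    using gen_NF[OF N x] by (simp add: h1N_def h2N_def a1_def b1_def a2_def b2_def)
  finally have "Pmat ** Nc ?X ** Pinv = Pmat ** NF (N$3$0) (rr N) ** Pinv" by simp
  then have X: "?X = Pmat ** NF (N$3$0) (rr N) ** Pinv" by (simp add: Nc_def conj_back)
  have "f ?X = f ?M" using f gU_in SOJ_cone[OF N] unfolding Inv_def by blast
  then show ?thesis using X by simp
qed

lemma nL_0: "nL 0 0 = mat 1"
  by (simp add: nL_def hU_0)

lemma nLN_30: "(nL a b ** N) $ 3 $ 0 = - (a * b) * N$0$0 - b * N$1$0 - a * N$2$0 + N$3$0"
  by (simp add: matrix_matrix_mult_def sum4 nL_def transpose_def hU_def distinct4 algebra_simps)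

lemma col0_nz: assumes "N \<in> SOJ" shows "N$0$0 \<noteq> 0 \<or> N$1$0 \<noteq> 0 \<or> N$2$0 \<noteq> 0 \<or> N$3$0 \<noteq> 0"
proof (rule ccontr)
  assume "\<not> ?thesis"
  then have "column 0 N = 0" by (simp add: column_def vec_eq_iff forall4)
  then have "det N = 0" by (rule det_zero_column(1))
  then show False using assms by (simp add: SOJ_def)
qed

lemma vanish:
  assumes h: "h \<in> fs.span (monomials d)" and I: "Inv (restr h)"
    and z: "\<And>a b. a \<noteq> 0 \<Longrightarrow> b \<noteq> 0 \<Longrightarrow> h (Phi a b) = 0"
    and M: "M \<in> cone_SO4"
  shows "h M = 0"
proof -
  have step1: "h (Pmat ** N ** Pinv) = 0" if N: "N \<in> SOJ" and x: "N$3$0 \<noteq> 0" for N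
  proof -
    define r where "r = rr N"
    have r: "r \<noteq> 0" using gen_NF[OF N x] r_def by simp
    define a where "a = csqrt (N$3$0 / r)"
    have a2: "a^2 = N$3$0 / r" unfolding a_def by simp
    then have a: "a \<noteq> 0" using x r by auto
    define b where "b = - (r * a)"
    have b: "b \<noteq> 0" using a r b_def by simp
    have e1: "nL a b $ 3 $ 0 = N$3$0"
      unfolding nL_entries b_def using a2 r by (simp add: power2_eq_square field_simps)
    have e2: "rr (nL a b) = r" using rr_nL[OF a b] a by (simp add: b_def)
    have x': "nL a b $ 3 $ 0 \<noteq> 0" using e1 x by simp
    have "restr h (Pmat ** N ** Pinv) = restr h (Pmat ** NF (N$3$0) r ** Pinv)"
      using gen_f[OF I N x] r_def by simp
    also have "\<dots> = restr h (Pmat ** nL a b ** Pinv)"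
      using gen_f[OF I nL_SOJ x'] e1 e2 by simp
    also have "\<dots> = h (Phi a b)" using Phi_SO4 SO4_cone by (simp add: restr_def Phi_def)
    also have "\<dots> = 0" using z a b by simp
    finally show ?thesis using SOJ_cone[OF N] by (simp add: restr_def)
  qed
  have step2: "h (Pmat ** N ** Pinv) = 0" if N: "N \<in> SOJ" for N
  proof (cases "N$3$0 = 0")
    case False then show ?thesis using step1 N by blast
  next
    case True
    obtain \<alpha> \<beta> where ab: "\<And>t. t \<noteq> 0 \<Longrightarrow> (nL (\<alpha> * t) (\<beta> * t) ** N) $ 3 $ 0 \<noteq> 0"
    proof (cases "N$1$0 \<noteq> 0")
      case True
      then show ?thesis using \<open>N$3$0 = 0\<close> by (intro that[of 0 1]) (simp add: nLN_30)
    next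
      case c1: False
      show ?thesis
      proof (cases "N$2$0 \<noteq> 0")
        case True
        then show ?thesis using \<open>N$3$0 = 0\<close> c1 by (intro that[of 1 0]) (simp add: nLN_30)
      next
        case False
        then have "N$0$0 \<noteq> 0" using col0_nz[OF N] c1 \<open>N$3$0 = 0\<close> by auto
        then show ?thesis using \<open>N$3$0 = 0\<close> c1 False by (intro that[of 1 1]) (simp add: nLN_30)
      qed
    qed
    let ?Phi = "\<lambda>t. Pmat ** (nL (\<alpha> * t) (\<beta> * t) ** N) ** Pinv"
    obtain q where q: "\<And>t. h (?Phi t) = poly q t"
      using fam_poly[of ?Phi, OF _ h] polyfun_curve unfolding polyfun_def by metis
    have "poly q t = 0" if "t \<noteq> 0" for t
    proof -
      have "nL (\<alpha> * t) (\<beta> * t) ** N \<in> SOJ" by (rule SOJ_mult[OF nL_SOJ N])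
      then show ?thesis using step1 ab[OF that] q by metis
    qed
    then have "q = 0"
      using poly_roots_finite infinite_nonzero finite_subset[of "{a::complex. a \<noteq> 0}" "{t. poly q t = 0}"]
      by blast
    then have "h (?Phi 0) = 0" using q[of 0] by simp
    then show ?thesis by (simp add: nL_0)
  qed
  obtain c M' where MM: "M = smat c M'" "M' \<in> SO4" using M cone_iff by blast
  have "Nc M' \<in> SOJ" using MM(2) SO4_iff_SOJ Nc_def by simp
  then have "h M' = 0" using step2 conj_back Nc_def by metis
  then show ?thesis using MM hom_in[OF h] by simp
qed



abbreviation FK :: "nat \<Rightarrow> nat \<times> nat \<Rightarrow> cmat4 \<Rightarrow> complex" where
  "FK d k \<equiv> restr (Fp d (fst k) (snd k))"

lemma restr_Phi: "restr g (Phi a b) = g (Phi a b)"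
  using SO4_cone[OF Phi_SO4] by (simp add: restr_def)

lemma sg_sq: "sg n m * sg n m = 1"
  unfolding sg_def power_add[symmetric] mult_2[symmetric] power_mult by simp

lemma sg_nz: "sg n m \<noteq> 0"
  using sg_sq[of n m] by auto

lemma Ksum_box: "(\<Sum>k\<in>Kset d. g k) = (\<Sum>n\<le>d. \<Sum>m\<le>d. if (n, m) \<in> Kset d then g (n, m) else 0)"
proof -
  have "(\<Sum>n\<le>d. \<Sum>m\<le>d. if (n, m) \<in> Kset d then g (n, m) else 0)
      = (\<Sum>k\<in>{..d} \<times> {..d}. if k \<in> Kset d then g k else 0)"
    by (simp add: sum.cartesian_product)
  also have "\<dots> = (\<Sum>k\<in>({..d} \<times> {..d}) \<inter> Kset d. g k)"
    by (simp add: sum.inter_restrict)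
  also have "({..d} \<times> {..d}) \<inter> Kset d = Kset d" by (auto simp: Kset_def)
  finally show ?thesis by simp
qed

lemma coef_unique:
  fixes c :: "nat \<times> nat \<Rightarrow> complex"
  assumes "\<And>a b. a \<noteq> 0 \<Longrightarrow> b \<noteq> 0 \<Longrightarrow> (\<Sum>k\<in>Kset d. c k * (a ^ fst k * b ^ snd k)) = 0"
    and "k \<in> Kset d"
  shows "c k = 0"
proof -
  obtain n m where k: "k = (n, m)" by force
  have nm: "n \<le> d" "m \<le> d" using assms(2) k by (auto simp: Kset_def)
  define C where "C = (\<lambda>n m. if (n, m) \<in> Kset d then c (n, m) else 0)"
  have "C n m = 0"
  proof (rule sum2_zero[where D = d])
    fix a b :: complex assume ab: "a \<noteq> 0" "b \<noteq> 0"
    have "(\<Sum>n\<le>d. \<Sum>m\<le>d. C n m * a ^ n * b ^ m)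
        = (\<Sum>n\<le>d. \<Sum>m\<le>d. if (n, m) \<in> Kset d then c (n, m) * (a ^ fst (n, m) * b ^ snd (n, m)) else 0)"
      unfolding C_def by (intro sum.cong refl) (simp add: mult.assoc)
    also have "\<dots> = 0" using assms(1)[OF ab] unfolding Ksum_box by simp
    finally show "(\<Sum>n\<le>d. \<Sum>m\<le>d. C n m * a ^ n * b ^ m) = 0" .
  qed (use nm in auto)
  then show ?thesis using assms(2) k by (simp add: C_def)
qed

lemma FK_Phi: "k \<in> Kset d \<Longrightarrow> FK d k (Phi a b) = sg (fst k) (snd k) * (a ^ fst k * b ^ snd k)"
  using Fp_Phi[of "fst k" "snd k" d a b] by (simp add: restr_Phi mult.assoc)

lemma inj_FK: "inj_on (FK d) (Kset d)"
proof (rule inj_onI, rule ccontr)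
  fix k1 k2 assume k1: "k1 \<in> Kset d" and k2: "k2 \<in> Kset d" and eq: "FK d k1 = FK d k2" and ne: "k1 \<noteq> k2"
  define c where "c = (\<lambda>k. (if k = k1 then sg (fst k1) (snd k1) else 0) + (if k = k2 then - sg (fst k2) (snd k2) else 0))"
  have "c k1 = 0"
  proof (rule coef_unique[OF _ k1])
    fix a b :: complex assume "a \<noteq> 0" "b \<noteq> 0"
    have "(\<Sum>k\<in>Kset d. c k * (a ^ fst k * b ^ snd k))
      = (\<Sum>k\<in>Kset d. (if k = k1 then sg (fst k1) (snd k1) * (a ^ fst k * b ^ snd k) else 0))
        + (\<Sum>k\<in>Kset d. (if k = k2 then - sg (fst k2) (snd k2) * (a ^ fst k * b ^ snd k) else 0))"
      unfolding sum.distrib[symmetric] c_def by (intro sum.cong refl) auto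
    also have "\<dots> = sg (fst k1) (snd k1) * (a ^ fst k1 * b ^ snd k1) - sg (fst k2) (snd k2) * (a ^ fst k2 * b ^ snd k2)"
      using k1 k2 Kset_finite by (simp add: sum.delta)
    also have "\<dots> = FK d k1 (Phi a b) - FK d k2 (Phi a b)" using FK_Phi k1 k2 by simp
    also have "\<dots> = 0" using eq by simp
    finally show "(\<Sum>k\<in>Kset d. c k * (a ^ fst k * b ^ snd k)) = 0" .
  qed
  then show False using ne sg_nz by (simp add: c_def)
qed

lemma indep_FK: "\<not> fs.dependent (FK d ` Kset d)"
proof
  assume "fs.dependent (FK d ` Kset d)"
  then obtain t u v0 where t: "finite t" "t \<subseteq> FK d ` Kset d" and s: "(\<Sum>v\<in>t. fscale (u v) v) = 0"
    and v0: "v0 \<in> t" "u v0 \<noteq> 0"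
    unfolding fs.dependent_explicit by blast
  define T where "T = {k \<in> Kset d. FK d k \<in> t}"
  have TK: "T \<subseteq> Kset d" by (auto simp: T_def)
  have tT: "t = FK d ` T" using t(2) by (auto simp: T_def)
  have injT: "inj_on (FK d) T" using inj_on_subset[OF inj_FK TK] .
  have fT: "finite T" using finite_subset[OF TK Kset_finite] .
  define c where "c = (\<lambda>k. if k \<in> T then u (FK d k) * sg (fst k) (snd k) else 0)"
  have c0: "c k = 0" if "k \<in> Kset d" for k
  proof (rule coef_unique[OF _ that])
    fix a b :: complex assume "a \<noteq> 0" "b \<noteq> 0"
    have "(\<Sum>k\<in>Kset d. c k * (a ^ fst k * b ^ snd k))
        = (\<Sum>k\<in>Kset d. if k \<in> T then u (FK d k) * FK d k (Phi a b) else 0)"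
      unfolding c_def by (intro sum.cong refl) (use TK FK_Phi in \<open>auto simp: mult.assoc\<close>)
    also have "\<dots> = (\<Sum>k\<in>T. u (FK d k) * FK d k (Phi a b))"
      by (subst sum.inter_restrict[OF Kset_finite, symmetric]) (simp add: inf.absorb2[OF TK])
    also have "\<dots> = (\<Sum>v\<in>t. fscale (u v) v) (Phi a b)"
      unfolding tT sum_fun_app by (simp add: sum.reindex[OF injT] fscale_app)
    also have "\<dots> = 0" using s by simp
    finally show "(\<Sum>k\<in>Kset d. c k * (a ^ fst k * b ^ snd k)) = 0" .
  qed
  obtain k0 where k0: "k0 \<in> T" "v0 = FK d k0" using v0(1) tT by blast
  have "c k0 = 0" using c0 k0(1) TK by blast
  then show False using k0 v0(2) sg_nz by (simp add: c_def)
qed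



lemma fps_X_mult_right_nth: "fps_nth ((f::rat fps) * fps_X) n = (if n = 0 then 0 else fps_nth f (n - 1))"
  by (subst mult.commute) simp

lemma step1: "Abs_fps (\<lambda>n. of_nat ((n div 2 + 1)^2) :: rat) * (1 - fps_X)
   = Abs_fps (\<lambda>n. if even n then of_nat n + 1 else 0)"
proof (rule fps_ext)
  fix n
  show "fps_nth (Abs_fps (\<lambda>n. of_nat ((n div 2 + 1)^2) :: rat) * (1 - fps_X)) n
     = fps_nth (Abs_fps (\<lambda>n. if even n then of_nat n + 1 else 0)) n"
  proof (cases n)
    case 0 then show ?thesis by (simp add: right_diff_distrib)
  next
    case (Suc m)
    have "(Suc m) div 2 = (if even m then m div 2 else m div 2 + 1)" by presburger
    then show ?thesis using Suc
      by (auto simp: right_diff_distrib fps_X_mult_right_nth power2_eq_square algebra_simps elim!: evenE oddE)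
  qed
qed

lemma step2: "Abs_fps (\<lambda>n. if even n then of_nat n + 1 else 0 :: rat) * (1 - fps_X^2)
   = Abs_fps (\<lambda>n. if n = 0 then 1 else if even n then 2 else 0)"
proof (rule fps_ext)
  fix n
  show "fps_nth (Abs_fps (\<lambda>n. if even n then of_nat n + 1 else 0 :: rat) * (1 - fps_X^2)) n
     = fps_nth (Abs_fps (\<lambda>n. if n = 0 then 1 else if even n then 2 else (0::rat))) n"
  proof (cases "n < 2")
    case True
    then have "n = 0 \<or> n = 1" by auto
    then show ?thesis by (auto simp: right_diff_distrib mult.commute[of _ "fps_X^2"] fps_X_power_mult_nth)
  next
    case False
    then show ?thesis
      by (auto simp: right_diff_distrib mult.commute[of _ "fps_X^2"] fps_X_power_mult_nth of_nat_diff
          elim!: evenE oddE)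
  qed
qed

lemma step3: "Abs_fps (\<lambda>n. if n = 0 then 1 else if even n then 2 else 0 :: rat) * (1 - fps_X^2)
   = 1 + fps_X^2"
proof (rule fps_ext)
  fix n
  show "fps_nth (Abs_fps (\<lambda>n. if n = 0 then 1 else if even n then 2 else 0 :: rat) * (1 - fps_X^2)) n
     = fps_nth (1 + fps_X^2 :: rat fps) n"
  proof (cases "n < 3")
    case True
    then have "n = 0 \<or> n = 1 \<or> n = 2" by auto
    then show ?thesis by (auto simp: right_diff_distrib mult.commute[of _ "fps_X^2"] fps_X_power_mult_nth fps_X_power_nth)
  next
    case False
    then show ?thesis
      by (auto simp: right_diff_distrib mult.commute[of _ "fps_X^2"] fps_X_power_mult_nth fps_X_power_nth
          elim!: evenE oddE)
  qed
qed

lemma series_eq: "Abs_fps (\<lambda>n. of_nat ((n div 2 + 1)^2) :: rat) =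
           (1 + fps_X ^ 2) / ((1 - fps_X) * (1 - fps_X ^ 2) ^ 2)"
proof -
  let ?A = "Abs_fps (\<lambda>n. of_nat ((n div 2 + 1)^2) :: rat)"
  let ?D = "(1 - fps_X) * (1 - fps_X ^ 2) ^ 2 :: rat fps"
  have AD: "?A * ?D = 1 + fps_X^2"
    using step1 step2 step3 by (simp add: power2_eq_square mult.assoc[symmetric])
  have D0: "fps_nth ?D 0 \<noteq> 0" by simp
  have "(1 + fps_X ^ 2) / ?D = (?A * ?D) * inverse ?D" unfolding AD by (rule fps_divide_unit[OF D0])
  also have "\<dots> = ?A" using inverse_mult_eq_1'[OF D0] by (simp add: mult.assoc)
  finally show ?thesis by simp
qed



lemma neg_smat: "Pmat ** (- N) ** Pinv = smat (-1) (Pmat ** N ** Pinv)"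
proof -
  have "- N = smat (-1) N" by (simp add: smat_def vec_eq_iff)
  then show ?thesis by (simp add: smat_mult_l smat_mult_r)
qed

lemma inv_deg_rep: assumes "f \<in> inv_deg d"
  shows "\<exists>p. p \<in> fs.span (monomials d) \<and> f = restr p" and "Inv f"
  using assms unfolding inv_deg_def coord_ring_deg_def hom_polys_def Inv_def restr_def by blast+

lemma Inv_diff: "Inv f \<Longrightarrow> Inv g \<Longrightarrow> Inv (\<lambda>M. f M - g M)"
  unfolding Inv_def by simp

lemma Inv_lin: "(\<And>k. k \<in> T \<Longrightarrow> Inv (F k)) \<Longrightarrow> Inv (\<lambda>M. \<Sum>k\<in>T. c k * F k M)"
  unfolding Inv_def by simp

lemma parity:
  assumes f: "Inv f" and fp: "f = restr p" and p: "p \<in> fs.span (monomials d)"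
    and a: "a \<noteq> 0" and b: "b \<noteq> 0"
  shows "p (Phi (-a) b) = (-1)^d * p (Phi a b)" and "p (Phi a (-b)) = (-1)^d * p (Phi a b)"
proof -
  have N1: "nL (-a) b \<in> SOJ" "nL a (-b) \<in> SOJ" "- nL a b \<in> SOJ" by (simp_all add: nL_SOJ neg_SOJ)
  have x: "nL (-a) b $ 3 $ 0 = a * b" "nL a (-b) $ 3 $ 0 = a * b" "(- nL a b) $ 3 $ 0 = a * b"
    by (simp_all add: nL_entries)
  have ab: "a * b \<noteq> 0" using a b by simp
  have r: "rr (nL (-a) b) = b / a" "rr (nL a (-b)) = b / a" "rr (- nL a b) = b / a"
    using rr_nL[of "-a" b] rr_nL[of a "-b"] rr_neg_nL[OF a b] a b by simp_all
  have fPhi: "f (Phi a' b') = p (Phi a' b')" for a' b' using fp restr_Phi by simp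
  have neg: "f (Pmat ** (- nL a b) ** Pinv) = (-1)^d * p (Phi a b)"
  proof -
    have "Phi a b \<in> cone_SO4" using SO4_cone[OF Phi_SO4] .
    then have "smat (-1) (Phi a b) \<in> cone_SO4" by (rule smat_cone)
    then show ?thesis unfolding neg_smat Phi_def[symmetric] fp restr_def by (simp add: hom_in[OF p])
  qed
  have common: "f (Pmat ** (- nL a b) ** Pinv) = f (Pmat ** NF (a * b) (b / a) ** Pinv)"
    using gen_f[OF f N1(3)] x(3) r(3) ab by (simp add: nL_entries)
  have "f (Phi (-a) b) = f (Pmat ** NF (a * b) (b / a) ** Pinv)"
    using gen_f[OF f N1(1)] x(1) r(1) ab by (simp add: Phi_def)
  then show "p (Phi (-a) b) = (-1)^d * p (Phi a b)" using neg common fPhi by simp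
  have "f (Phi a (-b)) = f (Pmat ** NF (a * b) (b / a) ** Pinv)"
    using gen_f[OF f N1(2)] x(2) r(2) ab by (simp add: Phi_def)
  then show "p (Phi a (-b)) = (-1)^d * p (Phi a b)" using neg common fPhi by simp
qed

lemma neg1_ne: assumes "n \<le> d" "odd (d - n)" shows "(-1::complex)^n - (-1)^d \<noteq> 0"
proof -
  have "d = n + (d - n)" using assms(1) by simp
  then have "(-1::complex)^d = (-1)^n * (-1)^(d-n)" by (metis power_add)
  also have "\<dots> = - ((-1)^n)" using assms(2) by simp
  finally have e: "(-1::complex)^d = - ((-1)^n)" .
  show ?thesis unfolding e by simp
qed

lemma coef_parity:
  assumes Q: "bideg Q d"
    and pa: "\<And>a b. a \<noteq> 0 \<Longrightarrow> b \<noteq> 0 \<Longrightarrow> ev Q (-a) b = (-1)^d * ev Q a b"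
    and pb: "\<And>a b. a \<noteq> 0 \<Longrightarrow> b \<noteq> 0 \<Longrightarrow> ev Q a (-b) = (-1)^d * ev Q a b"
    and nm: "n \<le> d" "m \<le> d" "(n, m) \<notin> Kset d"
  shows "coeff (coeff Q n) m = 0"
proof -
  define C where "C = (\<lambda>n m. coeff (coeff Q n) m)"
  have ev: "ev Q a b = (\<Sum>n\<le>d. \<Sum>m\<le>d. C n m * a ^ n * b ^ m)" for a b
    unfolding C_def by (rule ev_sum[OF Q])
  define C1 where "C1 = (\<lambda>n m. C n m * ((-1::complex)^n - (-1)^d))"
  define C2 where "C2 = (\<lambda>n m. C n m * ((-1::complex)^m - (-1)^d))"
  have "C1 n m = 0"
  proof (rule sum2_zero[where D = d])
    fix a b :: complex assume ab: "a \<noteq> 0" "b \<noteq> 0"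
    have "(\<Sum>n\<le>d. \<Sum>m\<le>d. C1 n m * a ^ n * b ^ m)
       = (\<Sum>n\<le>d. \<Sum>m\<le>d. C n m * (-a) ^ n * b ^ m - (-1)^d * (C n m * a ^ n * b ^ m))"
      unfolding C1_def by (intro sum.cong refl) (simp add: power_minus[of a] algebra_simps)
    also have "\<dots> = ev Q (-a) b - (-1)^d * ev Q a b"
      unfolding ev by (simp add: sum_subtractf sum_distrib_left)
    also have "\<dots> = 0" using pa[OF ab] by simp
    finally show "(\<Sum>n\<le>d. \<Sum>m\<le>d. C1 n m * a ^ n * b ^ m) = 0" .
  qed (use nm in auto)
  moreover have "C2 n m = 0"
  proof (rule sum2_zero[where D = d])
    fix a b :: complex assume ab: "a \<noteq> 0" "b \<noteq> 0"
    have "(\<Sum>n\<le>d. \<Sum>m\<le>d. C2 n m * a ^ n * b ^ m)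
       = (\<Sum>n\<le>d. \<Sum>m\<le>d. C n m * a ^ n * (-b) ^ m - (-1)^d * (C n m * a ^ n * b ^ m))"
      unfolding C2_def by (intro sum.cong refl) (simp add: power_minus[of b] algebra_simps)
    also have "\<dots> = ev Q a (-b) - (-1)^d * ev Q a b"
      unfolding ev by (simp add: sum_subtractf sum_distrib_left)
    also have "\<dots> = 0" using pb[OF ab] by simp
    finally show "(\<Sum>n\<le>d. \<Sum>m\<le>d. C2 n m * a ^ n * b ^ m) = 0" .
  qed (use nm in auto)
  moreover have "odd (d - n) \<or> odd (d - m)" using nm by (auto simp: Kset_def)
  ultimately show ?thesis using neg1_ne nm unfolding C1_def C2_def C_def by auto
qed

lemma FK_Inv: "k \<in> Kset d \<Longrightarrow> Inv (FK d k)"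
  using restr_in[of "fst k" "snd k" d] inv_deg_rep(2) by simp

lemma inv_in_span: assumes fin: "f \<in> inv_deg d" shows "f \<in> fs.span (FK d ` Kset d)"
proof -
  obtain p where p: "p \<in> fs.span (monomials d)" and fp: "f = restr p"
    using inv_deg_rep(1)[OF fin] by blast
  have If: "Inv f" using inv_deg_rep(2)[OF fin] .
  obtain Q where Q: "bideg Q d" and pQ: "\<And>a b. p (Phi a b) = ev Q a b"
    using Phi_rep[OF p] by blast
  define C where "C = (\<lambda>n m. coeff (coeff Q n) m)"
  have C0: "C n m = 0" if "n \<le> d" "m \<le> d" "(n, m) \<notin> Kset d" for n m
    unfolding C_def
  proof (rule coef_parity[OF Q _ _ that])
    fix a b :: complex assume ab: "a \<noteq> 0" "b \<noteq> 0"
    show "ev Q (-a) b = (-1)^d * ev Q a b" using parity(1)[OF If fp p ab] by (simp add: pQ)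
    show "ev Q a (-b) = (-1)^d * ev Q a b" using parity(2)[OF If fp p ab] by (simp add: pQ)
  qed
  define co where "co = (\<lambda>k. C (fst k) (snd k) * sg (fst k) (snd k))"
  define q where "q = (\<Sum>k\<in>Kset d. fscale (co k) (Fp d (fst k) (snd k)))"
  define g where "g = (\<Sum>k\<in>Kset d. fscale (co k) (FK d k))"
  have qin: "q \<in> fs.span (monomials d)" unfolding q_def
    by (intro fs.span_sum fs.span_scale Fp_in) auto
  have gin: "g \<in> fs.span (FK d ` Kset d)" unfolding g_def
    by (intro fs.span_sum fs.span_scale fs.span_base) auto
  have gM: "g M = (\<Sum>k\<in>Kset d. co k * FK d k M)" for M
    unfolding g_def by (simp add: sum_fun_app fscale_app)
  have qM: "q M = (\<Sum>k\<in>Kset d. co k * Fp d (fst k) (snd k) M)" for M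
    unfolding q_def by (simp add: sum_fun_app fscale_app)
  define hh where "hh = (\<lambda>M. p M - q M)"
  have hin: "hh \<in> fs.span (monomials d)" unfolding hh_def by (rule diff_in[OF p qin])
  have rh: "restr hh = (\<lambda>M. f M - (\<Sum>k\<in>Kset d. co k * FK d k M))"
  proof
    fix M
    show "restr hh M = f M - (\<Sum>k\<in>Kset d. co k * FK d k M)"
    proof (cases "M \<in> cone_SO4")
      case True
      then have "(\<Sum>k\<in>Kset d. co k * FK d k M) = q M" unfolding qM restr_def by simp
      then show ?thesis using True by (simp add: restr_def hh_def fp)
    next
      case False
      then show ?thesis by (simp add: restr_def fp)
    qed
  qed
  have Ih: "Inv (restr hh)" unfolding rh
    by (intro Inv_diff If Inv_lin FK_Inv) simp
  have zh: "hh (Phi a b) = 0" for a b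
  proof -
    have "q (Phi a b) = (\<Sum>k\<in>Kset d. C (fst k) (snd k) * (a ^ fst k * b ^ snd k))"
      unfolding qM co_def
    proof (rule sum.cong[OF refl])
      fix k assume k: "k \<in> Kset d"
      have e: "x * s * (s * y) = x * (s * s) * y" for x s y :: complex by (simp add: mult_ac)
      show "C (fst k) (snd k) * sg (fst k) (snd k) * Fp d (fst k) (snd k) (Phi a b)
          = C (fst k) (snd k) * (a ^ fst k * b ^ snd k)"
        using Fp_Phi[of "fst k" "snd k" d a b] k by (simp add: e sg_sq)
    qed
    also have "\<dots> = (\<Sum>n\<le>d. \<Sum>m\<le>d. C n m * a ^ n * b ^ m)"
      unfolding Ksum_box
    proof (intro sum.cong refl)
      fix n m assume "n \<in> {..d}" "m \<in> {..d}"
      then show "(if (n, m) \<in> Kset d then C (fst (n, m)) (snd (n, m)) * (a ^ fst (n, m) * b ^ snd (n, m)) else 0)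
          = C n m * a ^ n * b ^ m"
        using C0[of n m] by (cases "(n, m) \<in> Kset d") (simp_all add: mult.assoc)
    qed
    also have "\<dots> = p (Phi a b)" unfolding pQ C_def by (rule ev_sum[OF Q, symmetric])
    finally show ?thesis by (simp add: hh_def)
  qed
  have "f = g"
  proof
    fix M
    show "f M = g M"
    proof (cases "M \<in> cone_SO4")
      case True
      have "hh M = 0" by (rule vanish[OF hin Ih _ True]) (rule zh)
      then show ?thesis using True by (simp add: hh_def fp restr_def gM qM)
    next
      case False
      then show ?thesis by (simp add: fp restr_def gM)
    qed
  qed
  then show ?thesis using gin by simp
qed



lemma card_half: "card {n. n \<le> d \<and> even (d - n)} = d div 2 + 1"
proof -
  have "{n. n \<le> d \<and> even (d - n)} = (\<lambda>k. d - 2 * k) ` {..d div 2}"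
  proof (intro set_eqI iffI)
    fix n assume "n \<in> {n. n \<le> d \<and> even (d - n)}"
    then have "n \<le> d" "even (d - n)" by auto
    from \<open>even (d - n)\<close> obtain k where "d - n = 2 * k" by (rule evenE)
    then have "n = d - 2 * k" "k \<in> {..d div 2}" using \<open>n \<le> d\<close> by auto
    then show "n \<in> (\<lambda>k. d - 2 * k) ` {..d div 2}" by blast
  next
    fix n assume "n \<in> (\<lambda>k. d - 2 * k) ` {..d div 2}"
    then obtain k where "k \<le> d div 2" "n = d - 2 * k" by auto
    then show "n \<in> {n. n \<le> d \<and> even (d - n)}" by auto
  qed
  moreover have "inj_on (\<lambda>k. d - 2 * k) {..d div 2}"
    by (rule inj_onI) auto
  ultimately show ?thesis by (simp add: card_image)
qed

lemma card_K: "card (Kset d) = (d div 2 + 1)^2"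
proof -
  have "Kset d = {n. n \<le> d \<and> even (d - n)} \<times> {n. n \<le> d \<and> even (d - n)}"
    by (auto simp: Kset_def)
  then show ?thesis by (simp only: card_cartesian_product card_half power2_eq_square)
qed

lemma dim_inv: "vector_space.dim fscale (inv_deg d) = (d div 2 + 1)^2"
proof -
  have sub: "FK d ` Kset d \<subseteq> inv_deg d" using restr_in by auto
  have sup: "inv_deg d \<subseteq> fs.span (FK d ` Kset d)" using inv_in_span by auto
  have "fs.span (inv_deg d) = fs.span (FK d ` Kset d)"
    using fs.span_mono[OF sub] fs.span_mono[OF sup] by (simp add: fs.span_span)
  then have "fs.dim (inv_deg d) = fs.dim (FK d ` Kset d)"
    by (metis fs.dim_span)
  also have "\<dots> = card (FK d ` Kset d)" by (rule fs.dim_eq_card_independent[OF indep_FK])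
  also have "\<dots> = card (Kset d)" by (rule card_image[OF inj_FK])
  finally show ?thesis using card_K by simp
qed

theorem proposition5p2:
  shows "hilbert_series_inv =
           (1 + fps_X ^ 2) / ((1 - fps_X) * (1 - fps_X ^ 2) ^ 2)"
proof -
  have "hilbert_series_inv = Abs_fps (\<lambda>n. of_nat ((n div 2 + 1)^2) :: rat)"
    unfolding hilbert_series_inv_def dim_inv ..
  then show ?thesis using series_eq by simp
qed


end
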